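(* Let $\mathcal{P}\subseteq\mathbb{Z}_{\geq0}$, working with formal power series over a commutative ring $R\supseteq\mathbb{Q}$. Then $$\Xi^{\mathrm{CYC},\mathcal{P}}(z)=z\, e_{\mathcal{P}-1}\big(T^{\mathcal{P}}(z)\big)\,F^{\mathcal{P}}(z)^2.$$
   Context: $[n]=\{1,\dots,n\}$. $e_\mathcal{P}(z)=\sum_{n\in\mathcal{P}}z^n/n!$, $\mathcal{P}-1=\{n-1:n\in\mathcal{P},n\ge1\}$. $T^\mathcal{P}(z)=\sum_t z^{|t|}/|t|!$ over labeled rooted trees $t$ (trees on vertex set $[|t|]$ with a distinguished root) in which every vertex has a number of children in $\mathcal{P}$. Let $\mathcal{F}_n$ be the functions $f:[n]\to[n]$ with $|f^{-1}(x)|\in\mathcal{P}$ for all $x$ ($\mathcal{F}_0$ = empty function), $F^\mathcal{P}(z)=\sum_n|\mathcal{F}_n|z^n/n!$, $F^{\mathrm{CYC},\mathcal{P}}(u,z)=\sum_n\frac{z^n}{n!}\sum_{f\in\mathcal{F}_n}u^{\mathrm{cyc}(f)}$ with $\mathrm{cyc}(f)=\#\{x: f^j(x)=x\text{ for some }j\ge1\}$, and $\Xi^{\mathrm{CYC},\mathcal{P}}(z)=\big(\partial_uF^{\mathrm{CYC},\mathcal{P}}(u,z)\big)|_{u=1}$. *)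

theory Defs
  imports "HOL-Computational_Algebra.Polynomial" "HOL-Computational_Algebra.Formal_Power_Series"
    "HOL-Library.FuncSet"
begin

definition expP :: "nat set \<Rightarrow> 'a::field_char_0 fps" where
  "expP P = Abs_fps (\<lambda>n. if n \<in> P then 1 / fact n else 0)"

definition shiftP :: "nat set \<Rightarrow> nat set" where
  "shiftP P = {m. \<exists>n\<in>P. n \<ge> 1 \<and> m = n - 1}"

text \<open>Labeled rooted trees on vertex set [n], encoded by root r and parent map p
  (defined on [n] minus the root), such that every vertex reaches the root.\<close>
definition ptrees :: "nat set \<Rightarrow> nat \<Rightarrow> (nat \<times> (nat \<Rightarrow> nat)) set" where
  "ptrees P n = {(r, p). r \<in> {1..n} \<and> p \<in> ({1..n} - {r}) \<rightarrow>\<^sub>E {1..n}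
      \<and> (\<forall>x\<in>{1..n}. \<exists>k. (p ^^ k) x = r)
      \<and> (\<forall>x\<in>{1..n}. card {y \<in> {1..n} - {r}. p y = x} \<in> P)}"

definition treeGF :: "nat set \<Rightarrow> 'a::field_char_0 fps" where
  "treeGF P = Abs_fps (\<lambda>n. of_nat (card (ptrees P n)) / fact n)"

definition pfuns :: "nat set \<Rightarrow> nat \<Rightarrow> (nat \<Rightarrow> nat) set" where
  "pfuns P n = {f \<in> {1..n} \<rightarrow>\<^sub>E {1..n}. \<forall>x\<in>{1..n}. card {y \<in> {1..n}. f y = x} \<in> P}"

definition funGF :: "nat set \<Rightarrow> 'a::field_char_0 fps" where
  "funGF P = Abs_fps (\<lambda>n. of_nat (card (pfuns P n)) / fact n)"

definition cyc :: "nat \<Rightarrow> (nat \<Rightarrow> nat) \<Rightarrow> nat" where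
  "cyc n f = card {x \<in> {1..n}. \<exists>j\<ge>1. (f ^^ j) x = x}"

text \<open>Bivariate series F^{CYC,P}(u,z): power series in z with polynomial (in u) coefficients.\<close>
definition funCycGF :: "nat set \<Rightarrow> 'a::field_char_0 poly fps" where
  "funCycGF P = Abs_fps (\<lambda>n. smult (1 / fact n) (\<Sum>f\<in>pfuns P n. monom 1 (cyc n f)))"

definition XiCyc :: "nat set \<Rightarrow> 'a::field_char_0 fps" where
  "XiCyc P = Abs_fps (\<lambda>n. poly (pderiv (fps_nth (funCycGF P) n)) 1)"

end

theory Submission
  imports Defs "HOL-Combinatorics.Permutations"
begin

inductive reach :: "(nat \<Rightarrow> nat) \<Rightarrow> nat set \<Rightarrow> nat \<Rightarrow> nat \<Rightarrow> bool" for p Z where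
  base: "x \<in> Z \<Longrightarrow> reach p Z x x"
| step: "x \<notin> Z \<Longrightarrow> reach p Z (p x) r \<Longrightarrow> reach p Z x r"

lemma reach_in: "reach p Z x r \<Longrightarrow> r \<in> Z"
  by (induction rule: reach.induct) auto

lemma reach_Z: "x \<in> Z \<Longrightarrow> reach p Z x r \<longleftrightarrow> r = x"
  by (auto elim: reach.cases intro: reach.base)

lemma reach_nZ: "x \<notin> Z \<Longrightarrow> reach p Z x r \<longleftrightarrow> reach p Z (p x) r"
  by (auto elim: reach.cases intro: reach.step)

lemma reach_det: "reach p Z x r \<Longrightarrow> reach p Z x r' \<Longrightarrow> r = r'"
proof (induction arbitrary: r' rule: reach.induct)
  case (base x)
  then show ?case using reach_Z by auto
next
  case (step x r)
  then show ?case using reach_nZ by auto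
qed

lemma reach_transfer:
  assumes "reach p Z x r" "x \<in> A" "\<forall>y\<in>A - Z. p y \<in> A \<and> q y = p y" "A \<inter> Z' = A \<inter> Z"
  shows "reach q Z' x r"
  using assms
proof (induction rule: reach.induct)
  case (base x)
  then show ?case by (auto intro: reach.base)
next
  case (step x r)
  then have "x \<notin> Z'" by auto
  moreover have "reach q Z' (p x) r" using step by auto
  ultimately show ?case using step by (auto intro: reach.step)
qed

lemma reach_closed:
  assumes "reach p Z x r" "x \<in> A" "\<forall>y\<in>A - Z. p y \<in> A"
  shows "r \<in> A"
  using assms by (induction rule: reach.induct) auto

lemma reach_iff_funpow: "(\<exists>k. (p ^^ k) x = r) \<longleftrightarrow> reach p {r} x r"
proof
  assume "\<exists>k. (p ^^ k) x = r"
  then obtain k where "(p ^^ k) x = r" by blast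
  then show "reach p {r} x r"
  proof (induction k arbitrary: x)
    case 0
    then show ?case by (auto intro: reach.base)
  next
    case (Suc k)
    show ?case
    proof (cases "x = r")
      case True then show ?thesis by (auto intro: reach.base)
    next
      case False
      have "(p ^^ k) (p x) = r" using Suc.prems by (simp add: funpow_Suc_right del: funpow.simps)
      then show ?thesis using Suc.IH False by (auto intro: reach.step)
    qed
  qed
next
  assume "reach p {r} x r"
  then show "\<exists>k. (p ^^ k) x = r"
  proof (induction rule: reach.induct)
    case (base x)
    then show ?case by (intro exI[of _ 0]) auto
  next
    case (step x r')
    then obtain k where "(p ^^ k) (p x) = r'" by blast
    then have "(p ^^ Suc k) x = r'" by (simp add: funpow_Suc_right del: funpow.simps)
    then show ?case by blast
  qed
qed

definition fo :: "nat set \<Rightarrow> nat set \<Rightarrow> nat set \<Rightarrow> nat set \<Rightarrow> (nat \<Rightarrow> nat) set" where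
  "fo P Q S Z = {p \<in> (S - Z) \<rightarrow>\<^sub>E S. (\<forall>x\<in>S. \<exists>r. reach p Z x r)
     \<and> (\<forall>x\<in>S. card {y \<in> S - Z. p y = x} \<in> (if x \<in> Z then Q else P))}"


definition tr :: "(nat \<Rightarrow> nat) \<Rightarrow> nat set \<Rightarrow> nat set \<Rightarrow> (nat \<Rightarrow> nat) \<Rightarrow> nat \<Rightarrow> nat" where
  "tr h S Z p = restrict (\<lambda>y. h (p (inv_into S h y))) (h ` S - h ` Z)"

lemma fo_finite: "finite S \<Longrightarrow> finite (fo P Q S Z)"
proof -
  assume "finite S"
  then have "finite ((S - Z) \<rightarrow>\<^sub>E S)" by (intro finite_PiE) auto
  then show ?thesis unfolding fo_def by (rule finite_subset[rotated]) auto
qed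

lemma tr_in_fo:
  assumes h: "bij_betw h S S'" and Z: "Z \<subseteq> S" and p: "p \<in> fo P Q S Z"
  shows "tr h S Z p \<in> fo P Q S' (h ` Z)"
proof -
  have S': "S' = h ` S" using h by (simp add: bij_betw_def)
  have inj: "inj_on h S" using h by (simp add: bij_betw_def)
  have pf: "p \<in> (S - Z) \<rightarrow>\<^sub>E S" and rch: "\<forall>x\<in>S. \<exists>r. reach p Z x r"
    and deg: "\<forall>x\<in>S. card {y \<in> S - Z. p y = x} \<in> (if x \<in> Z then Q else P)"
    using p by (auto simp: fo_def)
  define p' where "p' = tr h S Z p"
  have hZ: "\<And>x. x \<in> S \<Longrightarrow> h x \<in> h ` Z \<longleftrightarrow> x \<in> Z"
    using inj Z by (auto dest: inj_onD)
  have p'h: "\<And>x. x \<in> S - Z \<Longrightarrow> p' (h x) = h (p x)"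
    using inj hZ by (auto simp: p'_def tr_def)
  have "p' \<in> (S' - h ` Z) \<rightarrow>\<^sub>E S'"
  proof
    fix y assume y: "y \<in> S' - h ` Z"
    then obtain x where x: "x \<in> S" "y = h x" using S' by auto
    then have "x \<notin> Z" using y by auto
    then show "p' y \<in> S'" using x p'h pf S' by auto
  next
    fix y assume "y \<notin> S' - h ` Z"
    then show "p' y = undefined" unfolding p'_def tr_def restrict_def using S' by auto
  qed
  moreover have "\<exists>r. reach p' (h ` Z) y r" if "y \<in> S'" for y
  proof -
    obtain x where x: "x \<in> S" "y = h x" using S' \<open>y \<in> S'\<close> by auto
    obtain r where r: "reach p Z x r" using rch x by auto
    have "reach p' (h ` Z) (h x) (h r)" using r x(1)
    proof (induction rule: reach.induct)
      case (base x)
      then show ?case by (auto intro: reach.base)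
    next
      case (step x r)
      have "p x \<in> S" using pf step by auto
      then have "reach p' (h ` Z) (h (p x)) (h r)" using step by auto
      then have "reach p' (h ` Z) (p' (h x)) (h r)" using p'h step by auto
      moreover have "h x \<notin> h ` Z" using hZ step by auto
      ultimately show ?case by (auto intro: reach.step)
    qed
    then show ?thesis using x by auto
  qed
  moreover have "card {v \<in> S' - h ` Z. p' v = y} \<in> (if y \<in> h ` Z then Q else P)" if "y \<in> S'" for y
  proof -
    obtain x where x: "x \<in> S" "y = h x" using S' \<open>y \<in> S'\<close> by auto
    have "{v \<in> S' - h ` Z. p' v = y} = h ` {u \<in> S - Z. p u = x}"
    proof (intro set_eqI iffI)
      fix v assume v: "v \<in> {v \<in> S' - h ` Z. p' v = y}"
      then obtain u where u: "u \<in> S" "v = h u" using S' by auto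
      then have "u \<notin> Z" using v by auto
      then have "h (p u) = h x" using v u p'h x by auto
      then have "p u = x" using inj pf u \<open>u \<notin> Z\<close> x by (auto dest: inj_onD)
      then show "v \<in> h ` {u \<in> S - Z. p u = x}" using u \<open>u \<notin> Z\<close> by auto
    next
      fix v assume "v \<in> h ` {u \<in> S - Z. p u = x}"
      then obtain u where u: "u \<in> S" "u \<notin> Z" "p u = x" "v = h u" by auto
      then show "v \<in> {v \<in> S' - h ` Z. p' v = y}" using p'h hZ S' x by auto
    qed
    moreover have "card (h ` {u \<in> S - Z. p u = x}) = card {u \<in> S - Z. p u = x}"
      by (rule card_image) (rule inj_on_subset[OF inj], auto)
    ultimately show ?thesis using deg x hZ by auto
  qed
  ultimately show ?thesis unfolding p'_def[symmetric] fo_def by blast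
qed

lemma tr_inj:
  assumes h: "bij_betw h S S'" and Z: "Z \<subseteq> S"
  shows "inj_on (tr h S Z) (fo P Q S Z)"
proof (rule inj_onI)
  fix p q assume p: "p \<in> fo P Q S Z" and q: "q \<in> fo P Q S Z" and eq: "tr h S Z p = tr h S Z q"
  have inj: "inj_on h S" using h by (simp add: bij_betw_def)
  have pf: "p \<in> (S - Z) \<rightarrow>\<^sub>E S" "q \<in> (S - Z) \<rightarrow>\<^sub>E S" using p q by (auto simp: fo_def)
  show "p = q"
  proof
    fix x show "p x = q x"
    proof (cases "x \<in> S - Z")
      case True
      then have hx: "h x \<in> h ` S - h ` Z" using inj Z by (auto dest: inj_onD)
      have "tr h S Z p (h x) = h (p x)" "tr h S Z q (h x) = h (q x)"
        using hx True inj by (auto simp: tr_def)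
      then have "h (p x) = h (q x)" using eq by simp
      then show ?thesis using inj pf True by (auto dest: inj_onD)
    next
      case False
      then show ?thesis using pf by (auto simp: PiE_def extensional_def)
    qed
  qed
qed

lemma card_fo_bij:
  assumes h: "bij_betw h S S'" and Z: "Z \<subseteq> S" and fin: "finite S"
  shows "card (fo P Q S Z) = card (fo P Q S' (h ` Z))"
proof (rule antisym)
  have fS': "finite S'" using h fin bij_betw_finite by blast
  show "card (fo P Q S Z) \<le> card (fo P Q S' (h ` Z))"
    using card_inj_on_le[OF tr_inj[OF h Z] _ fo_finite[OF fS']] tr_in_fo[OF h Z] by blast
  have h': "bij_betw (inv_into S h) S' S" using h by (rule bij_betw_inv_into)
  have Z': "h ` Z \<subseteq> S'" using h Z by (auto simp: bij_betw_def)
  have "inv_into S h ` h ` Z = Z" using h Z by (meson bij_betw_imp_inj_on inv_into_image_cancel)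
  moreover have "card (fo P Q S' (h ` Z)) \<le> card (fo P Q S (inv_into S h ` h ` Z))"
    by (rule card_inj_on_le[OF tr_inj[OF h' Z'] image_subsetI[OF tr_in_fo[OF h' Z']] fo_finite[OF fin]])
  ultimately show "card (fo P Q S' (h ` Z)) \<le> card (fo P Q S Z)" by simp
qed

definition psi :: "nat set \<Rightarrow> nat set \<Rightarrow> nat \<Rightarrow> nat \<Rightarrow> nat" where
  "psi P Q n k = card (fo P Q {..<n} {..<k})"

lemma card_fo_same:
  assumes fin: "finite S" "finite S'" and Z: "Z \<subseteq> S" "Z' \<subseteq> S'"
    and c: "card S = card S'" "card Z = card Z'"
  shows "card (fo P Q S Z) = card (fo P Q S' Z')"
proof -
  have fZ: "finite Z" "finite Z'" using fin Z finite_subset by auto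
  obtain h1 where h1: "bij_betw h1 Z Z'" using finite_same_card_bij fZ c by blast
  have "card (S - Z) = card (S' - Z')" using c fin Z fZ by (simp add: card_Diff_subset)
  then obtain h2 where h2: "bij_betw h2 (S - Z) (S' - Z')"
    using finite_same_card_bij fin by (meson finite_Diff)
  define h where "h = (\<lambda>x. if x \<in> Z then h1 x else h2 x)"
  have "bij_betw h (Z \<union> (S - Z)) (Z' \<union> (S' - Z'))"
    unfolding h_def by (rule bij_betw_disjoint_Un[OF h1 h2]) auto
  then have hb: "bij_betw h S S'" using Z by (simp add: Un_absorb1 Un_Diff_cancel)
  have "h ` Z = Z'" using h1 by (auto simp: h_def bij_betw_def)
  then show ?thesis using card_fo_bij[OF hb Z(1) fin(1)] by simp
qed

lemma card_fo:
  assumes "finite S" "Z \<subseteq> S"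
  shows "card (fo P Q S Z) = psi P Q (card S) (card Z)"
  unfolding psi_def
  by (rule card_fo_same) (use assms card_mono[OF assms] in auto)


definition merge :: "nat set \<Rightarrow> (nat \<Rightarrow> nat) \<Rightarrow> (nat \<Rightarrow> nat) \<Rightarrow> nat \<Rightarrow> nat" where
  "merge U p1 p2 = (\<lambda>x. if x \<in> U then p1 x else p2 x)"

lemma fo_merge:
  assumes Z: "Z \<subseteq> S" "z \<in> Z" and U: "z \<in> U" "U \<subseteq> S - (Z - {z})"
    and p1: "p1 \<in> fo P Q U {z}" and p2: "p2 \<in> fo P Q (S - U) (Z - {z})"
  shows "merge U p1 p2 \<in> fo P Q S Z \<and> (\<forall>x\<in>S. reach (merge U p1 p2) Z x z \<longleftrightarrow> x \<in> U)"
proof -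
  define m where "m = merge U p1 p2"
  have UZ: "U \<inter> Z = {z}" using U Z by auto
  have p1f: "p1 \<in> (U - {z}) \<rightarrow>\<^sub>E U" and r1: "\<forall>x\<in>U. \<exists>r. reach p1 {z} x r"
    and d1: "\<forall>x\<in>U. card {y \<in> U - {z}. p1 y = x} \<in> (if x \<in> {z} then Q else P)"
    using p1 by (auto simp: fo_def)
  have p2f: "p2 \<in> (S - U - (Z - {z})) \<rightarrow>\<^sub>E (S - U)" and r2: "\<forall>x\<in>S - U. \<exists>r. reach p2 (Z - {z}) x r"
    and d2: "\<forall>x\<in>S - U. card {y \<in> S - U - (Z - {z}). p2 y = x} \<in> (if x \<in> Z - {z} then Q else P)"
    using p2 by (auto simp: fo_def)
  have m1: "\<And>x. x \<in> U \<Longrightarrow> m x = p1 x" and m2: "\<And>x. x \<notin> U \<Longrightarrow> m x = p2 x"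
    by (auto simp: m_def merge_def)
  have mf: "m \<in> (S - Z) \<rightarrow>\<^sub>E S"
  proof (rule PiE_I)
    fix x assume x: "x \<in> S - Z"
    show "m x \<in> S"
    proof (cases "x \<in> U")
      case True then have "x \<in> U - {z}" using x Z(2) by auto
      then have "p1 x \<in> U" by (rule PiE_mem[OF p1f])
      then show ?thesis using m1[OF True] U(2) by auto
    next
      case False then have "x \<in> S - U - (Z - {z})" using x by auto
      then have "p2 x \<in> S - U" by (rule PiE_mem[OF p2f])
      then show ?thesis using m2[OF False] by auto
    qed
  next
    fix x assume x: "x \<notin> S - Z"
    show "m x = undefined"
    proof (cases "x \<in> U")
      case True then have "x = z" using x UZ U(2) by blast
      then have "x \<notin> U - {z}" by simp
      then show ?thesis using m1[OF True] PiE_arb[OF p1f] by simp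
    next
      case False then have "x \<notin> S - U - (Z - {z})" using x U(1) by auto
      then show ?thesis using m2[OF False] PiE_arb[OF p2f] by simp
    qed
  qed
  have reachU: "reach m Z x z" if xU: "x \<in> U" for x
  proof -
    obtain r where r: "reach p1 {z} x r" using r1 xU by blast
    then have "r = z" using reach_in by auto
    have "reach m Z x r"
      by (rule reach_transfer[OF r xU]) (use p1f m1 UZ in auto)
    then show ?thesis using \<open>r = z\<close> by simp
  qed
  have reachnU: "\<exists>r. r \<noteq> z \<and> reach m Z x r" if xU: "x \<in> S - U" for x
  proof -
    obtain r where r: "reach p2 (Z - {z}) x r" using r2 xU by blast
    then have "r \<noteq> z" using reach_in by fastforce
    have "reach m Z x r"
      by (rule reach_transfer[OF r xU]) (use p2f m2 U in auto)
    then show ?thesis using \<open>r \<noteq> z\<close> by blast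
  qed
  have iff: "\<forall>x\<in>S. reach m Z x z \<longleftrightarrow> x \<in> U"
  proof (intro ballI iffI)
    fix x assume "x \<in> S" "reach m Z x z"
    show "x \<in> U"
    proof (rule ccontr)
      assume "x \<notin> U"
      then obtain r where "r \<noteq> z" "reach m Z x r" using reachnU \<open>x \<in> S\<close> by blast
      then show False using reach_det[OF \<open>reach m Z x z\<close>] by blast
    qed
  next
    fix x assume "x \<in> U" then show "reach m Z x z" by (rule reachU)
  qed
  have "\<forall>x\<in>S. \<exists>r. reach m Z x r" using reachU reachnU by blast
  moreover have "card {y \<in> S - Z. m y = x} \<in> (if x \<in> Z then Q else P)" if x: "x \<in> S" for x
  proof (cases "x \<in> U")
    case True
    have "{y \<in> S - Z. m y = x} = {y \<in> U - {z}. p1 y = x}"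
    proof (intro set_eqI iffI)
      fix y assume y: "y \<in> {y \<in> S - Z. m y = x}"
      show "y \<in> {y \<in> U - {z}. p1 y = x}"
      proof (cases "y \<in> U")
        case True then show ?thesis using y m1 Z(2) by auto
      next
        case False then have "m y \<in> S - U" using m2 p2f y by auto
        then show ?thesis using y \<open>x \<in> U\<close> by auto
      qed
    next
      fix y assume "y \<in> {y \<in> U - {z}. p1 y = x}"
      then show "y \<in> {y \<in> S - Z. m y = x}" using m1 UZ U by auto
    qed
    moreover have "x \<in> Z \<longleftrightarrow> x \<in> {z}" using UZ True by auto
    ultimately show ?thesis using d1 True by simp
  next
    case False
    have "{y \<in> S - Z. m y = x} = {y \<in> S - U - (Z - {z}). p2 y = x}"
    proof (intro set_eqI iffI)
      fix y assume y: "y \<in> {y \<in> S - Z. m y = x}"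
      show "y \<in> {y \<in> S - U - (Z - {z}). p2 y = x}"
      proof (cases "y \<in> U")
        case True then have "y \<in> U - {z}" using y Z(2) by auto
        then have "m y \<in> U" using m1 True PiE_mem[OF p1f] by auto
        then show ?thesis using y \<open>x \<notin> U\<close> by auto
      next
        case False then show ?thesis using y m2 by auto
      qed
    next
      fix y assume "y \<in> {y \<in> S - U - (Z - {z}). p2 y = x}"
      then show "y \<in> {y \<in> S - Z. m y = x}" using m2 Z U(1) by auto
    qed
    moreover have "x \<in> Z \<longleftrightarrow> x \<in> Z - {z}" using U False by auto
    moreover have "card {y \<in> S - U - (Z - {z}). p2 y = x} \<in> (if x \<in> Z - {z} then Q else P)"
      using d2 False x by blast
    ultimately show ?thesis by (simp only:)
  qed
  ultimately show ?thesis using mf iff unfolding m_def[symmetric] fo_def by blast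
qed

lemma fo_split:
  assumes Z: "Z \<subseteq> S" "z \<in> Z" and p: "p \<in> fo P Q S Z"
  defines "U \<equiv> {x \<in> S. reach p Z x z}"
  shows "z \<in> U \<and> U \<subseteq> S - (Z - {z}) \<and> restrict p (U - {z}) \<in> fo P Q U {z}
    \<and> restrict p (S - U - (Z - {z})) \<in> fo P Q (S - U) (Z - {z})
    \<and> p = merge U (restrict p (U - {z})) (restrict p (S - U - (Z - {z})))"
proof -
  have pf: "p \<in> (S - Z) \<rightarrow>\<^sub>E S" and rch: "\<forall>x\<in>S. \<exists>r. reach p Z x r"
    and deg: "\<forall>x\<in>S. card {y \<in> S - Z. p y = x} \<in> (if x \<in> Z then Q else P)"
    using p by (auto simp: fo_def)
  have zU: "z \<in> U" using Z by (auto simp: U_def intro: reach.base)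
  have UZ: "U \<inter> Z = {z}"
  proof
    show "U \<inter> Z \<subseteq> {z}"
    proof
      fix x assume "x \<in> U \<inter> Z"
      then have "reach p Z x z" "x \<in> Z" by (auto simp: U_def)
      then show "x \<in> {z}" using reach_Z[of x Z p z] by simp
    qed
    show "{z} \<subseteq> U \<inter> Z" using zU Z by auto
  qed
  have US: "U \<subseteq> S - (Z - {z})" using UZ by (auto simp: U_def)
  have clU: "p y \<in> U" if y: "y \<in> U" "y \<notin> Z" for y
  proof -
    have "reach p Z y z" using y by (simp add: U_def)
    then have "reach p Z (p y) z" using reach_nZ[OF y(2)] by blast
    moreover have "p y \<in> S" using PiE_mem[OF pf] y U_def by blast
    ultimately show ?thesis by (simp add: U_def)
  qed
  have clnU: "p y \<in> S - U" if y: "y \<in> S - U" "y \<notin> Z" for y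
  proof -
    have "\<not> reach p Z y z" using y by (simp add: U_def)
    then have "\<not> reach p Z (p y) z" using reach_nZ[OF y(2)] by blast
    moreover have "p y \<in> S" using PiE_mem[OF pf] y by blast
    ultimately show ?thesis by (simp add: U_def)
  qed
  define p1 where "p1 = restrict p (U - {z})"
  define p2 where "p2 = restrict p (S - U - (Z - {z}))"
  have p1f: "p1 \<in> (U - {z}) \<rightarrow>\<^sub>E U" using clU UZ by (auto simp: p1_def)
  have p2f: "p2 \<in> (S - U - (Z - {z})) \<rightarrow>\<^sub>E (S - U)" using clnU zU by (auto simp: p2_def)
  have "reach p1 {z} x z" if xU: "x \<in> U" for x
  proof -
    have r: "reach p Z x z" using xU by (simp add: U_def)
    show ?thesis
    proof (rule reach_transfer[OF r xU])
      show "\<forall>y\<in>U - Z. p y \<in> U \<and> p1 y = p y" using clU Z(2) by (auto simp: p1_def)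
      show "U \<inter> {z} = U \<inter> Z" using UZ zU by auto
    qed
  qed
  moreover have "card {y \<in> U - {z}. p1 y = x} \<in> (if x \<in> {z} then Q else P)" if "x \<in> U" for x
  proof -
    have "{y \<in> U - {z}. p1 y = x} = {y \<in> S - Z. p y = x}"
    proof (intro set_eqI iffI)
      fix y assume "y \<in> {y \<in> U - {z}. p1 y = x}"
      then show "y \<in> {y \<in> S - Z. p y = x}" using UZ US by (auto simp: p1_def)
    next
      fix y assume y: "y \<in> {y \<in> S - Z. p y = x}"
      then have "reach p Z (p y) z" using that by (simp add: U_def)
      then have "reach p Z y z" using reach_nZ[of y Z p z] y by blast
      then show "y \<in> {y \<in> U - {z}. p1 y = x}" using y zU Z(2) by (auto simp: p1_def U_def)
    qed
    moreover have "x \<in> Z \<longleftrightarrow> x \<in> {z}" using UZ that by auto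
    moreover have "card {y \<in> S - Z. p y = x} \<in> (if x \<in> Z then Q else P)"
      using deg that US by blast
    ultimately show ?thesis by (simp only:)
  qed
  ultimately have P1: "p1 \<in> fo P Q U {z}" using p1f unfolding fo_def by blast
  have "\<exists>r. reach p2 (Z - {z}) x r" if x: "x \<in> S - U" for x
  proof -
    obtain r where r: "reach p Z x r" using rch x by auto
    have "reach p2 (Z - {z}) x r"
      by (rule reach_transfer[OF r x]) (use clnU zU in \<open>auto simp: p2_def\<close>)
    then show ?thesis by blast
  qed
  moreover have "card {y \<in> S - U - (Z - {z}). p2 y = x} \<in> (if x \<in> Z - {z} then Q else P)" if x: "x \<in> S - U" for x
  proof -
    have "{y \<in> S - U - (Z - {z}). p2 y = x} = {y \<in> S - Z. p y = x}"
    proof (intro set_eqI iffI)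
      fix y assume "y \<in> {y \<in> S - U - (Z - {z}). p2 y = x}"
      then show "y \<in> {y \<in> S - Z. p y = x}" using zU by (auto simp: p2_def)
    next
      fix y assume y: "y \<in> {y \<in> S - Z. p y = x}"
      then have "y \<notin> U" using clU x by auto
      then show "y \<in> {y \<in> S - U - (Z - {z}). p2 y = x}" using y by (auto simp: p2_def)
    qed
    moreover have "x \<in> Z \<longleftrightarrow> x \<in> Z - {z}" using zU x by auto
    moreover have "card {y \<in> S - Z. p y = x} \<in> (if x \<in> Z then Q else P)"
      using deg x by blast
    ultimately show ?thesis by (simp only:)
  qed
  ultimately have P2: "p2 \<in> fo P Q (S - U) (Z - {z})" using p2f unfolding fo_def by blast
  have "p = merge U p1 p2"
  proof
    fix x show "p x = merge U p1 p2 x"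
    proof (cases "x \<in> U")
      case True
      then show ?thesis using pf Z by (cases "x = z") (auto simp: merge_def p1_def)
    next
      case False
      then show ?thesis using pf by (cases "x \<in> S - U - (Z - {z})") (auto simp: merge_def p2_def)
    qed
  qed
  then show ?thesis using zU US P1 P2 unfolding p1_def p2_def by blast
qed


lemma sum_pow_card:
  fixes g :: "nat \<Rightarrow> nat"
  assumes "finite A"
  shows "(\<Sum>V\<in>Pow A. g (card V)) = (\<Sum>j\<le>card A. (card A choose j) * g j)"
proof -
  have "(\<Sum>V\<in>Pow A. g (card V)) = (\<Sum>j\<le>card A. \<Sum>V\<in>{V. V \<in> Pow A \<and> card V = j}. g (card V))"
    by (rule sum.group[symmetric]) (use assms card_mono in auto)
  also have "\<dots> = (\<Sum>j\<le>card A. (card A choose j) * g j)"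
  proof (rule sum.cong[OF refl])
    fix j
    have "{V. V \<in> Pow A \<and> card V = j} = {B. B \<subseteq> A \<and> card B = j}" by auto
    then have "card {V. V \<in> Pow A \<and> card V = j} = card A choose j" using n_subsets[OF assms] by simp
    then show "(\<Sum>V\<in>{V. V \<in> Pow A \<and> card V = j}. g (card V)) = (card A choose j) * g j"
      by simp
  qed
  finally show ?thesis .
qed

lemma card_fo_split:
  assumes fin: "finite S" and Z: "Z \<subseteq> S" "z \<in> Z"
  shows "card (fo P Q S Z) = (\<Sum>U\<in>{U. z \<in> U \<and> U \<subseteq> S - (Z - {z})}.
            card (fo P Q U {z}) * card (fo P Q (S - U) (Z - {z})))"
proof -
  define UU where "UU = {U. z \<in> U \<and> U \<subseteq> S - (Z - {z})}"
  define F where "F U = (\<lambda>(p1, p2). merge U p1 p2) ` (fo P Q U {z} \<times> fo P Q (S - U) (Z - {z}))" for U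
  have eq: "fo P Q S Z = (\<Union>U\<in>UU. F U)"
  proof (intro set_eqI iffI)
    fix p assume p: "p \<in> fo P Q S Z"
    define U where "U = {x \<in> S. reach p Z x z}"
    have "z \<in> U \<and> U \<subseteq> S - (Z - {z}) \<and> restrict p (U - {z}) \<in> fo P Q U {z}
      \<and> restrict p (S - U - (Z - {z})) \<in> fo P Q (S - U) (Z - {z})
      \<and> p = merge U (restrict p (U - {z})) (restrict p (S - U - (Z - {z})))"
      unfolding U_def by (rule fo_split[OF Z p])
    then have U1: "U \<in> UU" and m1: "(restrict p (U - {z}), restrict p (S - U - (Z - {z}))) \<in> fo P Q U {z} \<times> fo P Q (S - U) (Z - {z})"
      and m2: "p = (\<lambda>(p1, p2). merge U p1 p2) (restrict p (U - {z}), restrict p (S - U - (Z - {z})))"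
      unfolding UU_def by auto
    have "p \<in> F U" unfolding F_def by (rule rev_image_eqI[where f="\<lambda>(p1, p2). merge U p1 p2", OF m1 m2])
    then show "p \<in> (\<Union>U\<in>UU. F U)" using U1 by (rule UN_I[rotated])
  next
    fix p assume "p \<in> (\<Union>U\<in>UU. F U)"
    then obtain U p1 p2 where hU: "U \<in> UU" and h1: "p1 \<in> fo P Q U {z}" and h2: "p2 \<in> fo P Q (S - U) (Z - {z})"
      and h3: "p = merge U p1 p2" unfolding F_def by auto
    then show "p \<in> fo P Q S Z" using fo_merge[OF Z _ _ h1 h2] hU unfolding UU_def by simp
  qed
  have finUU: "finite UU" unfolding UU_def by (rule finite_subset[of _ "Pow S"]) (use fin in auto)
  have finF: "finite (F U)" if "U \<in> UU" for U
  proof -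
    have "U \<subseteq> S" using that unfolding UU_def by auto
    then have "finite U" using fin by (rule finite_subset)
    then show ?thesis unfolding F_def using fin by (intro finite_imageI finite_cartesian_product fo_finite) auto
  qed
  have disj: "F U \<inter> F U' = {}" if "U \<in> UU" "U' \<in> UU" "U \<noteq> U'" for U U'
  proof (rule ccontr)
    assume "F U \<inter> F U' \<noteq> {}"
    then obtain m where "m \<in> F U" "m \<in> F U'" by blast
    then obtain p1 p2 q1 q2 where a: "p1 \<in> fo P Q U {z}" "p2 \<in> fo P Q (S - U) (Z - {z})" "m = merge U p1 p2"
      and b: "q1 \<in> fo P Q U' {z}" "q2 \<in> fo P Q (S - U') (Z - {z})" "m = merge U' q1 q2"
      unfolding F_def by auto
    have "\<forall>x\<in>S. reach m Z x z \<longleftrightarrow> x \<in> U" using fo_merge[OF Z _ _ a(1,2)] that(1) a(3) unfolding UU_def by blast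
    moreover have "\<forall>x\<in>S. reach m Z x z \<longleftrightarrow> x \<in> U'" using fo_merge[OF Z _ _ b(1,2)] that(2) b(3) unfolding UU_def by blast
    ultimately have "U = U'" using that(1,2) unfolding UU_def by blast
    then show False using that(3) by simp
  qed
  have cardF: "card (F U) = card (fo P Q U {z}) * card (fo P Q (S - U) (Z - {z}))" for U
  proof -
    have "inj_on (\<lambda>(p1, p2). merge U p1 p2) (fo P Q U {z} \<times> fo P Q (S - U) (Z - {z}))"
    proof (rule inj_onI)
      fix a b
      assume a: "a \<in> fo P Q U {z} \<times> fo P Q (S - U) (Z - {z})"
        and b: "b \<in> fo P Q U {z} \<times> fo P Q (S - U) (Z - {z})"
        and e0: "(\<lambda>(p1, p2). merge U p1 p2) a = (\<lambda>(p1, p2). merge U p1 p2) b"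
      obtain p1 p2 where ap: "a = (p1, p2)" by (cases a)
      obtain q1 q2 where bq: "b = (q1, q2)" by (cases b)
      have p1: "p1 \<in> fo P Q U {z}" and p2: "p2 \<in> fo P Q (S - U) (Z - {z})" using a ap by auto
      have q1: "q1 \<in> fo P Q U {z}" and q2: "q2 \<in> fo P Q (S - U) (Z - {z})" using b bq by auto
      have e: "merge U p1 p2 = merge U q1 q2" using e0 ap bq by simp
      have e': "\<And>x. merge U p1 p2 x = merge U q1 q2 x" using e by simp
      have p1f: "p1 \<in> (U - {z}) \<rightarrow>\<^sub>E U" "q1 \<in> (U - {z}) \<rightarrow>\<^sub>E U" using p1 q1 by (auto simp: fo_def)
      have p2f: "p2 \<in> (S - U - (Z - {z})) \<rightarrow>\<^sub>E (S - U)" "q2 \<in> (S - U - (Z - {z})) \<rightarrow>\<^sub>E (S - U)"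
        using p2 q2 by (auto simp: fo_def)
      have "p1 = q1"
      proof
        fix x show "p1 x = q1 x"
        proof (cases "x \<in> U")
          case True then show ?thesis using e'[of x] by (simp add: merge_def)
        next
          case False then show ?thesis using PiE_arb[OF p1f(1)] PiE_arb[OF p1f(2)] by simp
        qed
      qed
      moreover have "p2 = q2"
      proof
        fix x show "p2 x = q2 x"
        proof (cases "x \<in> U")
          case False then show ?thesis using e'[of x] by (simp add: merge_def)
        next
          case True then show ?thesis using PiE_arb[OF p2f(1)] PiE_arb[OF p2f(2)] by simp
        qed
      qed
      ultimately show "a = b" using ap bq by simp
    qed
    then show ?thesis unfolding F_def by (simp add: card_image card_cartesian_product)
  qed
  have "card (fo P Q S Z) = (\<Sum>U\<in>UU. card (F U))"
    unfolding eq by (rule card_UN_disjoint[OF finUU]) (use finF disj in auto)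
  then show ?thesis using cardF unfolding UU_def by simp
qed


lemma psi_split:
  assumes "1 \<le> k" "k \<le> n"
  shows "psi P Q n k = (\<Sum>j\<le>n - k. (n - k choose j) * (psi P Q (j + 1) 1 * psi P Q (n - j - 1) (k - 1)))"
proof -
  define S :: "nat set" where "S = {..<n}"
  define Z :: "nat set" where "Z = {..<k}"
  define z :: nat where "z = 0"
  have fin: "finite S" and ZS: "Z \<subseteq> S" and zZ: "z \<in> Z" using assms by (auto simp: S_def Z_def z_def)
  have cS: "card S = n" and cZ: "card Z = k" by (auto simp: S_def Z_def)
  have "psi P Q n k = card (fo P Q S Z)" by (simp add: psi_def S_def Z_def)
  also have "\<dots> = (\<Sum>U\<in>{U. z \<in> U \<and> U \<subseteq> S - (Z - {z})}.
            card (fo P Q U {z}) * card (fo P Q (S - U) (Z - {z})))"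
    by (rule card_fo_split[OF fin ZS zZ])
  also have "\<dots> = (\<Sum>V\<in>Pow (S - Z). card (fo P Q (insert z V) {z}) * card (fo P Q (S - insert z V) (Z - {z})))"
    by (rule sum.reindex_bij_witness[where i="insert z" and j="\<lambda>U. U - {z}"]) (use zZ ZS in \<open>auto simp: insert_Diff insert_absorb\<close>)
  also have "\<dots> = (\<Sum>V\<in>Pow (S - Z). psi P Q (card V + 1) 1 * psi P Q (n - card V - 1) (k - 1))"
  proof (rule sum.cong[OF refl])
    fix V assume V: "V \<in> Pow (S - Z)"
    have fV: "finite V" using V fin by (meson PowD finite_Diff finite_subset)
    have zV: "z \<notin> V" using V zZ by auto
    have c1: "card (insert z V) = card V + 1" using fV zV by simp
    have "card (fo P Q (insert z V) {z}) = psi P Q (card V + 1) 1"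
      using card_fo[of "insert z V" "{z}"] fV c1 by simp
    moreover have "card (S - insert z V) = n - card V - 1"
      using V zZ ZS fin cS c1 by (subst card_Diff_subset) (auto intro: fV)
    moreover have "card (Z - {z}) = k - 1" using cZ zZ by simp
    moreover have "card (fo P Q (S - insert z V) (Z - {z})) = psi P Q (card (S - insert z V)) (card (Z - {z}))"
      by (rule card_fo) (use fin V ZS in auto)
    ultimately show "card (fo P Q (insert z V) {z}) * card (fo P Q (S - insert z V) (Z - {z})) =
      psi P Q (card V + 1) 1 * psi P Q (n - card V - 1) (k - 1)" by simp
  qed
  also have "\<dots> = (\<Sum>j\<le>card (S - Z). (card (S - Z) choose j) * (psi P Q (j + 1) 1 * psi P Q (n - j - 1) (k - 1)))"
    by (rule sum_pow_card[where g = "\<lambda>j. psi P Q (j + 1) 1 * psi P Q (n - j - 1) (k - 1)"]) (use fin in auto)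
  also have "card (S - Z) = n - k" using cS cZ ZS fin by (simp add: card_Diff_subset finite_subset)
  finally show ?thesis .
qed


definition attach :: "nat set \<Rightarrow> nat \<Rightarrow> (nat \<Rightarrow> nat) \<Rightarrow> nat \<Rightarrow> nat" where
  "attach M r p' = (\<lambda>x. if x \<in> M then r else p' x)"

lemma fo_attach:
  assumes r: "r \<in> S" and M: "M \<subseteq> S - {r}" "card M \<in> Q" and p': "p' \<in> fo P P (S - {r}) M"
  shows "attach M r p' \<in> fo P Q S {r} \<and> {y \<in> S - {r}. attach M r p' y = r} = M"
proof -
  define q where "q = attach M r p'"
  have pf: "p' \<in> (S - {r} - M) \<rightarrow>\<^sub>E (S - {r})" and rch: "\<forall>x\<in>S - {r}. \<exists>m. reach p' M x m"
    and deg: "\<forall>x\<in>S - {r}. card {y \<in> S - {r} - M. p' y = x} \<in> (if x \<in> M then P else P)"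
    using p' by (auto simp: fo_def)
  have qM: "\<And>x. x \<in> M \<Longrightarrow> q x = r" and qnM: "\<And>x. x \<notin> M \<Longrightarrow> q x = p' x"
    by (auto simp: q_def attach_def)
  have qf: "q \<in> (S - {r}) \<rightarrow>\<^sub>E S"
  proof (rule PiE_I)
    fix x assume x: "x \<in> S - {r}"
    show "q x \<in> S"
    proof (cases "x \<in> M")
      case True then show ?thesis using qM r by simp
    next
      case False then have "x \<in> S - {r} - M" using x by simp
      then have "p' x \<in> S - {r}" by (rule PiE_mem[OF pf])
      then show ?thesis using qnM[OF False] by simp
    qed
  next
    fix x assume x: "x \<notin> S - {r}"
    then have "x \<notin> M" using M by auto
    moreover have "x \<notin> S - {r} - M" using x by auto
    ultimately show "q x = undefined" using qnM PiE_arb[OF pf] by simp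
  qed
  have rq: "reach q {r} x r" if x: "x \<in> S" for x
  proof (cases "x = r")
    case True then show ?thesis by (simp add: reach.base)
  next
    case False
    then obtain m where m: "reach p' M x m" using rch x by blast
    have "x \<in> S - {r}" using x False by simp
    with m show ?thesis
    proof (induction rule: reach.induct)
      case (base x)
      then have "x \<noteq> r" by simp
      moreover have "reach q {r} (q x) r" using qM[OF base(1)] by (simp add: reach.base)
      ultimately show ?case by (simp add: reach.step)
    next
      case (step x m)
      have "x \<in> S - {r} - M" using step by simp
      then have "p' x \<in> S - {r}" by (rule PiE_mem[OF pf])
      then have "reach q {r} (p' x) r" using step.IH by simp
      then have "reach q {r} (q x) r" using qnM[OF step(1)] by simp
      then show ?case using step(4) by (simp add: reach.step)
    qed
  qed
  have Mq: "{y \<in> S - {r}. q y = r} = M"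
  proof (intro set_eqI iffI)
    fix y assume y: "y \<in> {y \<in> S - {r}. q y = r}"
    show "y \<in> M"
    proof (rule ccontr)
      assume "y \<notin> M"
      then have "y \<in> S - {r} - M" using y by simp
      then have "p' y \<in> S - {r}" by (rule PiE_mem[OF pf])
      then show False using y qnM[OF \<open>y \<notin> M\<close>] by simp
    qed
  next
    fix y assume "y \<in> M" then show "y \<in> {y \<in> S - {r}. q y = r}" using M qM by auto
  qed
  have "card {y \<in> S - {r}. q y = x} \<in> (if x \<in> {r} then Q else P)" if x: "x \<in> S" for x
  proof (cases "x = r")
    case True then show ?thesis using Mq M by simp
  next
    case False
    have "{y \<in> S - {r}. q y = x} = {y \<in> S - {r} - M. p' y = x}"
    proof (intro set_eqI iffI)
      fix y assume y: "y \<in> {y \<in> S - {r}. q y = x}"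
      then have "y \<notin> M" using qM False by auto
      then show "y \<in> {y \<in> S - {r} - M. p' y = x}" using y qnM by auto
    next
      fix y assume y: "y \<in> {y \<in> S - {r} - M. p' y = x}"
      then show "y \<in> {y \<in> S - {r}. q y = x}" using qnM by auto
    qed
    then show ?thesis using deg x False by auto
  qed
  then have "q \<in> fo P Q S {r}" using qf rq unfolding fo_def by blast
  then show ?thesis using Mq unfolding q_def by blast
qed

lemma fo_detach:
  assumes r: "r \<in> S" and p: "p \<in> fo P Q S {r}"
  defines "M \<equiv> {y \<in> S - {r}. p y = r}"
  shows "M \<subseteq> S - {r} \<and> card M \<in> Q \<and> restrict p (S - {r} - M) \<in> fo P P (S - {r}) M
    \<and> p = attach M r (restrict p (S - {r} - M))"
proof -
  have pf: "p \<in> (S - {r}) \<rightarrow>\<^sub>E S" and rch: "\<forall>x\<in>S. \<exists>r'. reach p {r} x r'"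
    and deg: "\<forall>x\<in>S. card {y \<in> S - {r}. p y = x} \<in> (if x \<in> {r} then Q else P)"
    using p by (auto simp: fo_def)
  define p' where "p' = restrict p (S - {r} - M)"
  have p'f: "p' \<in> (S - {r} - M) \<rightarrow>\<^sub>E (S - {r})"
  proof (rule PiE_I)
    fix x assume x: "x \<in> S - {r} - M"
    then have "p x \<in> S" using PiE_mem[OF pf] by simp
    moreover have "p x \<noteq> r" using x unfolding M_def by blast
    ultimately show "p' x \<in> S - {r}" using x by (simp add: p'_def)
  next
    fix x assume "x \<notin> S - {r} - M" then show "p' x = undefined" by (auto simp: p'_def)
  qed
  have "\<exists>m. reach p' M x m" if x: "x \<in> S - {r}" for x
  proof -
    obtain r' where r': "reach p {r} x r'" using rch x by blast
    from r' x show ?thesis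
    proof (induction rule: reach.induct)
      case (base x) then show ?case by simp
    next
      case (step x r')
      show ?case
      proof (cases "x \<in> M")
        case True then show ?thesis by (blast intro: reach.base)
      next
        case False
        have "p x \<in> S" using PiE_mem[OF pf] step by simp
        moreover have "p x \<noteq> r" using False step by (simp add: M_def)
        ultimately obtain m where "reach p' M (p x) m" using step.IH by blast
        moreover have "p' x = p x" using False step by (simp add: p'_def)
        ultimately have "reach p' M (p' x) m" by simp
        then show ?thesis using False reach.step by blast
      qed
    qed
  qed
  moreover have "card {y \<in> S - {r} - M. p' y = x} \<in> (if x \<in> M then P else P)" if x: "x \<in> S - {r}" for x
  proof -
    have "{y \<in> S - {r} - M. p' y = x} = {y \<in> S - {r}. p y = x}"
      using x by (auto simp: p'_def M_def)
    then show ?thesis using deg x by auto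
  qed
  ultimately have "p' \<in> fo P P (S - {r}) M" using p'f unfolding fo_def by blast
  moreover have "card M \<in> Q" using bspec[OF deg r] by (simp add: M_def)
  moreover have "p = attach M r p'"
  proof
    fix x show "p x = attach M r p' x"
    proof (cases "x \<in> M")
      case True then show ?thesis by (simp add: attach_def M_def)
    next
      case False
      then show ?thesis using PiE_arb[OF pf, of x] by (cases "x \<in> S - {r}") (auto simp: attach_def p'_def)
    qed
  qed
  ultimately show ?thesis unfolding p'_def M_def by auto
qed

lemma card_fo_root:
  assumes fin: "finite S" and r: "r \<in> S"
  shows "card (fo P Q S {r}) = (\<Sum>M\<in>{M. M \<subseteq> S - {r} \<and> card M \<in> Q}. card (fo P P (S - {r}) M))"
proof -
  define MM where "MM = {M. M \<subseteq> S - {r} \<and> card M \<in> Q}"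
  define F where "F M = attach M r ` fo P P (S - {r}) M" for M
  have eq: "fo P Q S {r} = (\<Union>M\<in>MM. F M)"
  proof (intro set_eqI iffI)
    fix p assume p: "p \<in> fo P Q S {r}"
    define M where "M = {y \<in> S - {r}. p y = r}"
    have h: "M \<subseteq> S - {r} \<and> card M \<in> Q \<and> restrict p (S - {r} - M) \<in> fo P P (S - {r}) M
      \<and> p = attach M r (restrict p (S - {r} - M))"
      unfolding M_def by (rule fo_detach[OF r p])
    then have "p \<in> F M" unfolding F_def by blast
    moreover have "M \<in> MM" using h unfolding MM_def by blast
    ultimately show "p \<in> (\<Union>M\<in>MM. F M)" by blast
  next
    fix p assume "p \<in> (\<Union>M\<in>MM. F M)"
    then obtain M p' where hM: "M \<in> MM" and h1: "p' \<in> fo P P (S - {r}) M" and h2: "p = attach M r p'"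
      unfolding F_def by blast
    then have m1: "M \<subseteq> S - {r}" "card M \<in> Q" unfolding MM_def by auto
    show "p \<in> fo P Q S {r}" using fo_attach[OF r m1 h1] h2 by simp
  qed
  have finMM: "finite MM" unfolding MM_def by (rule finite_subset[of _ "Pow S"]) (use fin in auto)
  have finF: "finite (F M)" for M
    unfolding F_def using fin by (intro finite_imageI fo_finite) auto
  have disj: "F M \<inter> F M' = {}" if "M \<in> MM" "M' \<in> MM" "M \<noteq> M'" for M M'
  proof (rule ccontr)
    assume "F M \<inter> F M' \<noteq> {}"
    then obtain q p1 p2 where a: "p1 \<in> fo P P (S - {r}) M" "q = attach M r p1"
      and b: "p2 \<in> fo P P (S - {r}) M'" "q = attach M' r p2"
      unfolding F_def by blast
    have m1: "M \<subseteq> S - {r}" "card M \<in> Q" using that(1) unfolding MM_def by auto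
    have m2: "M' \<subseteq> S - {r}" "card M' \<in> Q" using that(2) unfolding MM_def by auto
    have "{y \<in> S - {r}. q y = r} = M" using fo_attach[OF r m1 a(1)] a(2) by simp
    moreover have "{y \<in> S - {r}. q y = r} = M'" using fo_attach[OF r m2 b(1)] b(2) by simp
    ultimately show False using that(3) by simp
  qed
  have cardF: "card (F M) = card (fo P P (S - {r}) M)" if "M \<in> MM" for M
  proof -
    have "inj_on (attach M r) (fo P P (S - {r}) M)"
    proof (rule inj_onI)
      fix p1 p2 assume p1: "p1 \<in> fo P P (S - {r}) M" and p2: "p2 \<in> fo P P (S - {r}) M"
        and e: "attach M r p1 = attach M r p2"
      have f1: "p1 \<in> (S - {r} - M) \<rightarrow>\<^sub>E (S - {r})" "p2 \<in> (S - {r} - M) \<rightarrow>\<^sub>E (S - {r})"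
        using p1 p2 by (auto simp: fo_def)
      show "p1 = p2"
      proof
        fix x show "p1 x = p2 x"
        proof (cases "x \<in> M")
          case True then show ?thesis using PiE_arb[OF f1(1), of x] PiE_arb[OF f1(2), of x] by simp
        next
          case False then show ?thesis using fun_cong[OF e, of x] by (simp add: attach_def)
        qed
      qed
    qed
    then show ?thesis unfolding F_def by (simp add: card_image)
  qed
  have "card (fo P Q S {r}) = (\<Sum>M\<in>MM. card (F M))"
    unfolding eq by (rule card_UN_disjoint[OF finMM]) (use finF disj in auto)
  also have "\<dots> = (\<Sum>M\<in>MM. card (fo P P (S - {r}) M))" using cardF by simp
  finally show ?thesis unfolding MM_def .
qed

lemma psi_root:
  "psi P Q (Suc n) 1 = (\<Sum>j\<le>n. (n choose j) * (if j \<in> Q then psi P P n j else 0))"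
proof -
  define S :: "nat set" where "S = {..<Suc n}"
  define r :: nat where "r = n"
  have fin: "finite S" and r: "r \<in> S" by (auto simp: S_def r_def)
  have cS': "card (S - {r}) = n" using r by (simp add: S_def)
  have "psi P Q (Suc n) 1 = card (fo P Q S {r})"
    using card_fo[OF fin, of "{r}" P Q] r by (simp add: S_def)
  also have "\<dots> = (\<Sum>M\<in>{M. M \<subseteq> S - {r} \<and> card M \<in> Q}. card (fo P P (S - {r}) M))"
    by (rule card_fo_root[OF fin r])
  also have "\<dots> = (\<Sum>M\<in>Pow (S - {r}). (if card M \<in> Q then psi P P n (card M) else 0))"
  proof -
    have "(\<Sum>M\<in>Pow (S - {r}). (if card M \<in> Q then psi P P n (card M) else 0))
        = (\<Sum>M\<in>{M \<in> Pow (S - {r}). card M \<in> Q}. psi P P n (card M))"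
      by (rule sum.inter_filter[symmetric]) (use fin in auto)
    also have "\<dots> = (\<Sum>M\<in>{M. M \<subseteq> S - {r} \<and> card M \<in> Q}. card (fo P P (S - {r}) M))"
    proof (rule sum.cong)
      show "{M \<in> Pow (S - {r}). card M \<in> Q} = {M. M \<subseteq> S - {r} \<and> card M \<in> Q}" by auto
    next
      fix M assume "M \<in> {M. M \<subseteq> S - {r} \<and> card M \<in> Q}"
      then show "psi P P n (card M) = card (fo P P (S - {r}) M)"
        using card_fo[of "S - {r}" M P P] fin cS' by simp
    qed
    finally show ?thesis by simp
  qed
  also have "\<dots> = (\<Sum>j\<le>n. (n choose j) * (if j \<in> Q then psi P P n j else 0))"
    using sum_pow_card[of "S - {r}" "\<lambda>j. if j \<in> Q then psi P P n j else 0"] fin cS' by simp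
  finally show ?thesis .
qed


lemma psi_zero: "psi P Q n 0 = (if n = 0 then 1 else 0)"
proof (cases "n = 0")
  case True
  have "fo P Q {} {} = {\<lambda>_. undefined}" by (auto simp: fo_def)
  then show ?thesis using True by (simp add: psi_def)
next
  case False
  have "fo P Q {..<n} {} = {}"
  proof (rule ccontr)
    assume "fo P Q {..<n} {} \<noteq> {}"
    then obtain p where "p \<in> fo P Q {..<n} {}" by blast
    then have "\<forall>x\<in>{..<n}. \<exists>r. reach p {} x r" by (simp add: fo_def)
    then obtain r where "reach p {} 0 r" using False by auto
    then show False using reach_in by fastforce
  qed
  then show ?thesis using False by (simp add: psi_def)
qed

lemma ptrees_eq: "ptrees P n = Sigma {1..n} (\<lambda>r. fo P P {1..n} {r})"
proof (intro set_eqI iffI)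
  fix t assume "t \<in> ptrees P n"
  then obtain r p where t: "t = (r, p)" and r: "r \<in> {1..n}" and pf: "p \<in> ({1..n} - {r}) \<rightarrow>\<^sub>E {1..n}"
    and k: "\<forall>x\<in>{1..n}. \<exists>k. (p ^^ k) x = r" and d: "\<forall>x\<in>{1..n}. card {y \<in> {1..n} - {r}. p y = x} \<in> P"
    unfolding ptrees_def by blast
  have "\<forall>x\<in>{1..n}. \<exists>r'. reach p {r} x r'" using k reach_iff_funpow by blast
  moreover have "\<forall>x\<in>{1..n}. card {y \<in> {1..n} - {r}. p y = x} \<in> (if x \<in> {r} then P else P)" using d by simp
  ultimately have "p \<in> fo P P {1..n} {r}" using pf unfolding fo_def by blast
  then show "t \<in> Sigma {1..n} (\<lambda>r. fo P P {1..n} {r})" using t r by blast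
next
  fix t assume "t \<in> Sigma {1..n} (\<lambda>r. fo P P {1..n} {r})"
  then obtain r p where t: "t = (r, p)" and r: "r \<in> {1..n}" and p: "p \<in> fo P P {1..n} {r}" by blast
  have pf: "p \<in> ({1..n} - {r}) \<rightarrow>\<^sub>E {1..n}" and rch: "\<forall>x\<in>{1..n}. \<exists>r'. reach p {r} x r'"
    and d: "\<forall>x\<in>{1..n}. card {y \<in> {1..n} - {r}. p y = x} \<in> (if x \<in> {r} then P else P)"
    using p unfolding fo_def by blast+
  have "\<forall>x\<in>{1..n}. \<exists>k. (p ^^ k) x = r"
  proof
    fix x assume "x \<in> {1..n}"
    then obtain r' where "reach p {r} x r'" using rch by blast
    moreover then have "r' = r" using reach_in by fastforce
    ultimately show "\<exists>k. (p ^^ k) x = r" using reach_iff_funpow by blast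
  qed
  moreover have "\<forall>x\<in>{1..n}. card {y \<in> {1..n} - {r}. p y = x} \<in> P" using d by simp
  ultimately show "t \<in> ptrees P n" unfolding ptrees_def using t r pf by blast
qed

lemma card_ptrees: "card (ptrees P n) = n * psi P P n 1"
proof -
  have "card (ptrees P n) = (\<Sum>r\<in>{1..n}. card (fo P P {1..n} {r}))"
    unfolding ptrees_eq by (rule card_SigmaI) (auto intro: fo_finite)
  also have "\<dots> = (\<Sum>r\<in>{1..n}. psi P P n 1)"
    by (rule sum.cong[OF refl]) (subst card_fo, auto)
  finally show ?thesis by simp
qed


lemma iter_in: "\<forall>y\<in>A. g y \<in> A \<Longrightarrow> x \<in> A \<Longrightarrow> (g ^^ k) x \<in> A"
  by (induction k) auto

lemma iter_agree: "\<forall>y\<in>A. g y \<in> A \<and> h y = g y \<Longrightarrow> x \<in> A \<Longrightarrow> (h ^^ k) x = (g ^^ k) x"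
proof (induction k)
  case 0 then show ?case by simp
next
  case (Suc k)
  have "(g ^^ k) x \<in> A" using iter_in[of A g x k] Suc.prems by blast
  then show ?case using Suc by simp
qed

lemma iter_mult: "(g ^^ j) x = x \<Longrightarrow> (g ^^ (j * m)) x = x"
proof (induction m)
  case 0 then show ?case by simp
next
  case (Suc m)
  have "(g ^^ (j * Suc m)) x = (g ^^ j) ((g ^^ (j * m)) x)"
    by (simp add: funpow_add)
  then show ?case using Suc by simp
qed

lemma iter_repeat:
  assumes "finite A" "\<forall>y\<in>A. g y \<in> A" "x \<in> A"
  shows "\<exists>a b. a < b \<and> (g ^^ a) x = (g ^^ b) x"
proof (rule ccontr)
  assume nt: "\<not> ?thesis"
  have "inj_on (\<lambda>i. (g ^^ i) x) {..card A}"
  proof (rule inj_onI)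
    fix i j assume e: "(g ^^ i) x = (g ^^ j) x"
    show "i = j"
    proof (rule ccontr)
      assume "i \<noteq> j"
      then have "i < j \<or> j < i" by arith
      then show False
      proof
        assume "i < j" then show False using nt e by blast
      next
        assume "j < i" then show False using nt e[symmetric] by blast
      qed
    qed
  qed
  moreover have "(\<lambda>i. (g ^^ i) x) ` {..card A} \<subseteq> A" using iter_in[OF assms(2,3)] by blast
  ultimately have "card {..card A} \<le> card A" by (rule card_inj_on_le[OF _ _ assms(1)])
  then show False by simp
qed

lemma cyc_of_inj:
  assumes "finite A" "\<forall>y\<in>A. g y \<in> A" "inj_on g A" "x \<in> A"
  shows "\<exists>j\<ge>1. (g ^^ j) x = x"
proof -
  obtain a b where ab: "a < b" "(g ^^ a) x = (g ^^ b) x" using iter_repeat[OF assms(1,2,4)] by blast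
  define d where "d = b - a"
  have b: "b = a + d" using ab d_def by simp
  have "\<forall>x\<in>A. (g ^^ a) x = (g ^^ (a + d)) x \<longrightarrow> x = (g ^^ d) x"
  proof (induction a)
    case 0 then show ?case by simp
  next
    case (Suc a)
    show ?case
    proof (intro ballI impI)
      fix x assume x: "x \<in> A" and e: "(g ^^ Suc a) x = (g ^^ (Suc a + d)) x"
      have "(g ^^ a) (g x) = (g ^^ (a + d)) (g x)"
        using e by (simp add: funpow_Suc_right del: funpow.simps)
      moreover have "g x \<in> A" using assms(2) x by blast
      ultimately have "g x = (g ^^ d) (g x)" using Suc.IH by blast
      then have "g x = g ((g ^^ d) x)" by (simp add: funpow_swap1)
      moreover have "(g ^^ d) x \<in> A" using iter_in[OF assms(2) x] by blast
      ultimately show "x = (g ^^ d) x" using inj_onD[OF assms(3)] x by blast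
    qed
  qed
  then have "(g ^^ a) x = (g ^^ (a + d)) x \<longrightarrow> x = (g ^^ d) x" using assms(4) by blast
  then have "x = (g ^^ d) x" using ab b by simp
  moreover have "d \<ge> 1" using ab d_def by simp
  ultimately show ?thesis by (intro exI[of _ d]) simp
qed

definition cyset :: "nat \<Rightarrow> (nat \<Rightarrow> nat) \<Rightarrow> nat set" where
  "cyset n f = {x \<in> {1..n}. \<exists>j\<ge>1. (f ^^ j) x = x}"

definition comb :: "nat set \<Rightarrow> (nat \<Rightarrow> nat) \<Rightarrow> (nat \<Rightarrow> nat) \<Rightarrow> nat \<Rightarrow> nat" where
  "comb Z \<sigma> p = (\<lambda>x. if x \<in> Z then \<sigma> x else p x)"

lemma reach_iter:
  assumes "reach p Z x r" "\<forall>y. y \<notin> Z \<longrightarrow> f y = p y"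
  shows "\<exists>d. (f ^^ d) x \<in> Z"
  using assms
proof (induction rule: reach.induct)
  case (base x)
  then show ?case by (intro exI[of _ 0]) simp
next
  case (step x r)
  then obtain d where "(f ^^ d) (p x) \<in> Z" by blast
  then have "(f ^^ Suc d) x \<in> Z" using step by (simp add: funpow_Suc_right del: funpow.simps)
  then show ?case by blast
qed

lemma comb_pfun:
  assumes Z: "Z \<subseteq> {1..n}" and s: "\<sigma> permutes Z" and p: "p \<in> fo P (shiftP P) {1..n} Z"
  shows "comb Z \<sigma> p \<in> pfuns P n \<and> cyset n (comb Z \<sigma> p) = Z"
proof -
  define S where "S = {1..n::nat}"
  define f where "f = comb Z \<sigma> p"
  have ZS: "Z \<subseteq> S" using Z by (simp add: S_def)
  have finS: "finite S" by (simp add: S_def)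
  have finZ: "finite Z" using ZS finS finite_subset by blast
  have fZ: "\<And>x. x \<in> Z \<Longrightarrow> f x = \<sigma> x" and fnZ: "\<And>x. x \<notin> Z \<Longrightarrow> f x = p x"
    by (auto simp: f_def comb_def)
  have sZ: "\<And>x. x \<in> Z \<Longrightarrow> \<sigma> x \<in> Z" using permutes_in_image[OF s] by blast
  have pf: "p \<in> (S - Z) \<rightarrow>\<^sub>E S" and rch: "\<forall>x\<in>S. \<exists>r. reach p Z x r"
    and deg: "\<forall>x\<in>S. card {y \<in> S - Z. p y = x} \<in> (if x \<in> Z then shiftP P else P)"
    using p by (auto simp: fo_def S_def)
  have ff: "f \<in> S \<rightarrow>\<^sub>E S"
  proof (rule PiE_I)
    fix x assume x: "x \<in> S"
    show "f x \<in> S"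
    proof (cases "x \<in> Z")
      case True then show ?thesis using fZ sZ ZS by auto
    next
      case False then show ?thesis using fnZ PiE_mem[OF pf] x by auto
    qed
  next
    fix x assume x: "x \<notin> S"
    then have "x \<notin> Z" using ZS by auto
    then show "f x = undefined" using fnZ PiE_arb[OF pf] x by auto
  qed
  have "card {y \<in> S. f y = x} \<in> P" if x: "x \<in> S" for x
  proof -
    have split: "{y \<in> S. f y = x} = {y \<in> Z. \<sigma> y = x} \<union> {y \<in> S - Z. p y = x}"
    proof (intro set_eqI)
      fix y show "y \<in> {y \<in> S. f y = x} \<longleftrightarrow> y \<in> {y \<in> Z. \<sigma> y = x} \<union> {y \<in> S - Z. p y = x}"
        using ZS fZ[of y] fnZ[of y] by (cases "y \<in> Z") auto
    qed
    have fin1: "finite {y \<in> Z. \<sigma> y = x}" using finZ by simp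
    have fin2: "finite {y \<in> S - Z. p y = x}" using finS by simp
    have c: "card {y \<in> S. f y = x} = card {y \<in> Z. \<sigma> y = x} + card {y \<in> S - Z. p y = x}"
      unfolding split by (rule card_Un_disjoint[OF fin1 fin2]) auto
    show ?thesis
    proof (cases "x \<in> Z")
      case True
      obtain y where y: "\<sigma> y = x" "\<forall>y'. \<sigma> y' = x \<longrightarrow> y' = y" using s unfolding permutes_def by metis
      have "y \<in> Z" using y(1) True permutes_in_image[OF s] by blast
      then have "{y \<in> Z. \<sigma> y = x} = {y}"
      proof (intro set_eqI iffI)
        fix y' assume "y' \<in> {y \<in> Z. \<sigma> y = x}"
        then have "\<sigma> y' = x" by simp
        then have "y' = y" using y(2) by blast
        then show "y' \<in> {y}" by simp
      next
        fix y' assume "y' \<in> {y}" then show "y' \<in> {y \<in> Z. \<sigma> y = x}" using y(1) \<open>y \<in> Z\<close> by simp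
      qed
      then have c1: "card {y \<in> S. f y = x} = 1 + card {y \<in> S - Z. p y = x}" using c by simp
      have "card {y \<in> S - Z. p y = x} \<in> shiftP P" using deg x True by auto
      then obtain m where "m \<in> P" "m \<ge> 1" "card {y \<in> S - Z. p y = x} = m - 1"
        unfolding shiftP_def by blast
      then show ?thesis using c1 by simp
    next
      case False
      then have "{y \<in> Z. \<sigma> y = x} = {}" using sZ by auto
      then have "card {y \<in> S. f y = x} = card {y \<in> S - Z. p y = x}" using c by (simp only: card.empty add_0)
      moreover have "card {y \<in> S - Z. p y = x} \<in> P" using deg x False by auto
      ultimately show ?thesis by simp
    qed
  qed
  then have F: "f \<in> pfuns P n" using ff unfolding pfuns_def S_def by blast
  have fZZ: "\<forall>y\<in>Z. f y \<in> Z" using fZ sZ by auto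
  have "cyset n f = Z"
  proof (intro set_eqI iffI)
    fix x assume "x \<in> cyset n f"
    then have x: "x \<in> S" and "\<exists>j\<ge>1. (f ^^ j) x = x" unfolding cyset_def S_def by auto
    then obtain j where j: "j \<ge> 1" "(f ^^ j) x = x" by blast
    obtain r where "reach p Z x r" using rch x by blast
    moreover have "\<forall>y. y \<notin> Z \<longrightarrow> f y = p y" using fnZ by blast
    ultimately obtain d where d: "(f ^^ d) x \<in> Z" by (blast dest: reach_iter)
    have jd: "(f ^^ (j * d)) x = x" by (rule iter_mult[OF j(2)])
    have e1: "(f ^^ (j * d - d + d)) x = (f ^^ (j * d - d)) ((f ^^ d) x)" by (simp only: funpow_add comp_apply)
    have e2: "j * d - d + d = j * d" using j(1) by (cases j) auto
    have "(f ^^ (j * d - d)) ((f ^^ d) x) = x" using e1 e2 jd by simp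
    moreover have "(f ^^ (j * d - d)) ((f ^^ d) x) \<in> Z" using iter_in[OF fZZ d] by blast
    ultimately show "x \<in> Z" by simp
  next
    fix x assume x: "x \<in> Z"
    have "inj_on \<sigma> Z" using permutes_inj[OF s] inj_on_subset by blast
    then obtain j where j: "j \<ge> 1" "(\<sigma> ^^ j) x = x" using cyc_of_inj[OF finZ _ _ x] sZ by blast
    have "(f ^^ j) x = (\<sigma> ^^ j) x" using iter_agree[of Z \<sigma> f x j] fZ sZ x by blast
    then show "x \<in> cyset n f" using j x ZS unfolding cyset_def S_def by auto
  qed
  then show ?thesis using F unfolding f_def by blast
qed

lemma pfun_decomp:
  assumes f: "f \<in> pfuns P n"
  defines "Z \<equiv> cyset n f"
  shows "Z \<subseteq> {1..n} \<and> (\<lambda>x. if x \<in> Z then f x else x) permutes Z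
    \<and> restrict f ({1..n} - Z) \<in> fo P (shiftP P) {1..n} Z
    \<and> f = comb Z (\<lambda>x. if x \<in> Z then f x else x) (restrict f ({1..n} - Z))"
proof -
  define S where "S = {1..n::nat}"
  have finS: "finite S" by (simp add: S_def)
  have ff: "f \<in> S \<rightarrow>\<^sub>E S" and fib: "\<forall>x\<in>S. card {y \<in> S. f y = x} \<in> P"
    using f unfolding pfuns_def S_def by auto
  have fS: "\<forall>y\<in>S. f y \<in> S" using PiE_mem[OF ff] by blast
  have ZS: "Z \<subseteq> S" unfolding Z_def cyset_def S_def by auto
  have finZ: "finite Z" using ZS finS finite_subset by blast
  have Zc: "\<exists>j\<ge>1. (f ^^ j) y = y" if "y \<in> Z" for y using that unfolding Z_def cyset_def by auto
  have fZ: "f y \<in> Z" if y: "y \<in> Z" for y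
  proof -
    obtain j where j: "j \<ge> 1" "(f ^^ j) y = y" using Zc y by blast
    have "(f ^^ j) (f y) = f y" using j(2) by (metis funpow_swap1)
    moreover have "f y \<in> S" using fS ZS y by blast
    ultimately show ?thesis using j(1) unfolding Z_def cyset_def S_def by auto
  qed
  have injZ: "inj_on f Z"
  proof (rule inj_onI)
    fix x y assume x: "x \<in> Z" and y: "y \<in> Z" and e: "f x = f y"
    obtain jx where jx: "jx \<ge> 1" "(f ^^ jx) x = x" using Zc x by blast
    obtain jy where jy: "jy \<ge> 1" "(f ^^ jy) y = y" using Zc y by blast
    define J where "J = jx * jy"
    have J1: "J = Suc (J - 1)" using jx jy by (simp add: J_def)
    have "(f ^^ J) x = x" using iter_mult[OF jx(2)] by (simp add: J_def)
    moreover have "(f ^^ J) y = y" using iter_mult[OF jy(2), of jx] by (simp add: J_def mult.commute)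
    moreover have "(f ^^ J) x = (f ^^ (J - 1)) (f x)" "(f ^^ J) y = (f ^^ (J - 1)) (f y)"
      by (subst J1, simp add: funpow_Suc_right del: funpow.simps)+
    ultimately show "x = y" using e by metis
  qed
  define \<sigma> where "\<sigma> = (\<lambda>x. if x \<in> Z then f x else x)"
  have "inj_on \<sigma> Z" using injZ unfolding \<sigma>_def inj_on_def by auto
  moreover have "\<sigma> ` Z \<subseteq> Z" using fZ unfolding \<sigma>_def by auto
  ultimately have sZ: "\<sigma> ` Z = Z" using endo_inj_surj finZ by blast
  have "bij_betw \<sigma> Z Z" using sZ \<open>inj_on \<sigma> Z\<close> by (simp add: bij_betw_def)
  then have perm: "\<sigma> permutes Z" by (rule bij_imp_permutes) (simp add: \<sigma>_def)
  define p where "p = restrict f (S - Z)"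
  have pf: "p \<in> (S - Z) \<rightarrow>\<^sub>E S" using fS unfolding p_def by auto
  have toreach: "\<forall>x\<in>S. (f ^^ a) x \<in> Z \<longrightarrow> (\<exists>r. reach p Z x r)" for a
  proof (induction a)
    case 0 then show ?case by (auto intro: reach.base)
  next
    case (Suc a)
    show ?case
    proof (intro ballI impI)
      fix x assume x: "x \<in> S" and a: "(f ^^ Suc a) x \<in> Z"
      show "\<exists>r. reach p Z x r"
      proof (cases "x \<in> Z")
        case True then show ?thesis by (auto intro: reach.base)
      next
        case False
        have "(f ^^ a) (f x) \<in> Z" using a by (simp add: funpow_Suc_right del: funpow.simps)
        then obtain r where "reach p Z (f x) r" using Suc.IH fS x by blast
        moreover have "p x = f x" using x False by (simp add: p_def)
        ultimately show ?thesis using False reach.step by metis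
      qed
    qed
  qed
  have rch: "\<exists>r. reach p Z x r" if x: "x \<in> S" for x
  proof -
    obtain a b where ab: "a < b" "(f ^^ a) x = (f ^^ b) x" using iter_repeat[OF finS fS x] by blast
    define y where "y = (f ^^ a) x"
    have yS: "y \<in> S" using iter_in[OF fS x] by (simp add: y_def)
    have "(f ^^ (b - a)) y = (f ^^ (b - a + a)) x" by (simp add: y_def funpow_add)
    also have "b - a + a = b" using ab by simp
    finally have "(f ^^ (b - a)) y = y" using ab by (simp add: y_def)
    then have "y \<in> Z" using yS ab unfolding Z_def cyset_def S_def by (intro CollectI conjI) (auto intro!: exI[of _ "b - a"])
    then show ?thesis using toreach x by (auto simp: y_def)
  qed
  have deg: "card {y \<in> S - Z. p y = x} \<in> (if x \<in> Z then shiftP P else P)" if x: "x \<in> S" for x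
  proof -
    have split: "{y \<in> S. f y = x} = {y \<in> Z. f y = x} \<union> {y \<in> S - Z. p y = x}"
      using ZS by (auto simp: p_def)
    have c: "card {y \<in> S. f y = x} = card {y \<in> Z. f y = x} + card {y \<in> S - Z. p y = x}"
      unfolding split by (rule card_Un_disjoint) (use finZ finS in auto)
    have fx: "card {y \<in> S. f y = x} \<in> P" using fib x by blast
    show ?thesis
    proof (cases "x \<in> Z")
      case True
      then obtain y where y: "y \<in> Z" "\<sigma> y = x" using sZ by (metis imageE)
      then have fy: "f y = x" by (simp add: \<sigma>_def)
      have "{y \<in> Z. f y = x} = {y}"
      proof (intro set_eqI iffI)
        fix y' assume "y' \<in> {y \<in> Z. f y = x}"
        then have "y' \<in> Z" "f y' = f y" using fy by auto
        then show "y' \<in> {y}" using inj_onD[OF injZ] y(1) by blast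
      next
        fix y' assume "y' \<in> {y}" then show "y' \<in> {y \<in> Z. f y = x}" using y fy by simp
      qed
      then have "card {y \<in> S. f y = x} = 1 + card {y \<in> S - Z. p y = x}" using c by simp
      then have "card {y \<in> S - Z. p y = x} \<in> shiftP P" using fx unfolding shiftP_def by force
      then show ?thesis using True by simp
    next
      case False
      then have "{y \<in> Z. f y = x} = {}" using fZ by auto
      then have "card {y \<in> S. f y = x} = card {y \<in> S - Z. p y = x}" using c by (simp only: card.empty add_0)
      then show ?thesis using fx False by simp
    qed
  qed
  have pfo: "p \<in> fo P (shiftP P) S Z" unfolding fo_def using pf rch deg by blast
  have "f = comb Z \<sigma> p"
  proof
    fix x show "f x = comb Z \<sigma> p x"
    proof (cases "x \<in> Z")
      case True then show ?thesis by (simp add: comb_def \<sigma>_def)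
    next
      case False then show ?thesis using PiE_arb[OF ff, of x] by (cases "x \<in> S") (auto simp: comb_def p_def)
    qed
  qed
  then show ?thesis using ZS perm pfo unfolding \<sigma>_def p_def S_def by blast
qed


lemma sum_pfuns:
  fixes h :: "nat \<Rightarrow> nat"
  shows "(\<Sum>f\<in>pfuns P n. h (cyc n f)) = (\<Sum>k\<le>n. (n choose k) * (fact k * psi P (shiftP P) n k * h k))"
proof -
  define S where "S = {1..n::nat}"
  have finS: "finite S" by (simp add: S_def)
  have cS: "card S = n" by (simp add: S_def)
  define G where "G Z = (\<lambda>(\<sigma>, p). comb Z \<sigma> p) ` ({\<sigma>. \<sigma> permutes Z} \<times> fo P (shiftP P) S Z)" for Z
  have eq: "pfuns P n = (\<Union>Z\<in>Pow S. G Z)"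
  proof (intro set_eqI iffI)
    fix f assume f: "f \<in> pfuns P n"
    define Z where "Z = cyset n f"
    have h: "Z \<subseteq> {1..n} \<and> (\<lambda>x. if x \<in> Z then f x else x) permutes Z
      \<and> restrict f ({1..n} - Z) \<in> fo P (shiftP P) {1..n} Z
      \<and> f = comb Z (\<lambda>x. if x \<in> Z then f x else x) (restrict f ({1..n} - Z))"
      unfolding Z_def by (rule pfun_decomp[OF f])
    then have m1: "((\<lambda>x. if x \<in> Z then f x else x), restrict f ({1..n} - Z)) \<in> {\<sigma>. \<sigma> permutes Z} \<times> fo P (shiftP P) S Z"
      and m2: "f = (\<lambda>(\<sigma>, p). comb Z \<sigma> p) ((\<lambda>x. if x \<in> Z then f x else x), restrict f ({1..n} - Z))"
      by (auto simp: S_def)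
    have "f \<in> G Z" unfolding G_def by (rule rev_image_eqI[where f="\<lambda>(\<sigma>, p). comb Z \<sigma> p", OF m1 m2])
    moreover have "Z \<in> Pow S" using h by (simp add: S_def)
    ultimately show "f \<in> (\<Union>Z\<in>Pow S. G Z)" by blast
  next
    fix f assume "f \<in> (\<Union>Z\<in>Pow S. G Z)"
    then obtain Z \<sigma> p where Z: "Z \<subseteq> S" and s: "\<sigma> permutes Z" and p: "p \<in> fo P (shiftP P) S Z"
      and fe: "f = comb Z \<sigma> p" unfolding G_def by auto
    show "f \<in> pfuns P n" using comb_pfun[of Z n \<sigma> p P] Z s p fe by (simp add: S_def)
  qed
  have cycG: "cyc n f = card Z" if ZP: "Z \<in> Pow S" and fG: "f \<in> G Z" for Z f
  proof -
    obtain \<sigma> p where s: "\<sigma> permutes Z" and p: "p \<in> fo P (shiftP P) S Z" and fe: "f = comb Z \<sigma> p"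
      using fG unfolding G_def by auto
    have "cyset n f = Z" using comb_pfun[of Z n \<sigma> p P] ZP s p fe by (simp add: S_def)
    then show ?thesis by (simp add: cyc_def cyset_def)
  qed
  have finZ: "finite Z" if "Z \<in> Pow S" for Z using that finS by (meson PowD finite_subset)
  have cardG: "card (G Z) = fact (card Z) * psi P (shiftP P) n (card Z)" if Z: "Z \<in> Pow S" for Z
  proof -
    have "inj_on (\<lambda>(\<sigma>, p). comb Z \<sigma> p) ({\<sigma>. \<sigma> permutes Z} \<times> fo P (shiftP P) S Z)"
    proof (rule inj_onI)
      fix a b
      assume a: "a \<in> {\<sigma>. \<sigma> permutes Z} \<times> fo P (shiftP P) S Z"
        and b: "b \<in> {\<sigma>. \<sigma> permutes Z} \<times> fo P (shiftP P) S Z"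
        and e0: "(\<lambda>(\<sigma>, p). comb Z \<sigma> p) a = (\<lambda>(\<sigma>, p). comb Z \<sigma> p) b"
      obtain s1 p1 where ap: "a = (s1, p1)" by (cases a)
      obtain s2 p2 where bp: "b = (s2, p2)" by (cases b)
      have s1: "s1 permutes Z" and p1: "p1 \<in> fo P (shiftP P) S Z" using a ap by auto
      have s2: "s2 permutes Z" and p2: "p2 \<in> fo P (shiftP P) S Z" using b bp by auto
      have e: "\<And>x. comb Z s1 p1 x = comb Z s2 p2 x" using e0 ap bp by simp
      have f1: "p1 \<in> (S - Z) \<rightarrow>\<^sub>E S" "p2 \<in> (S - Z) \<rightarrow>\<^sub>E S" using p1 p2 by (auto simp: fo_def)
      have "s1 = s2"
      proof
        fix x show "s1 x = s2 x"
        proof (cases "x \<in> Z")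
          case True then show ?thesis using e[of x] by (simp add: comb_def)
        next
          case False then show ?thesis using permutes_not_in[OF s1 False] permutes_not_in[OF s2 False] by simp
        qed
      qed
      moreover have "p1 = p2"
      proof
        fix x show "p1 x = p2 x"
        proof (cases "x \<in> Z")
          case False then show ?thesis using e[of x] by (simp add: comb_def)
        next
          case True then show ?thesis using PiE_arb[OF f1(1), of x] PiE_arb[OF f1(2), of x] by simp
        qed
      qed
      ultimately show "a = b" using ap bp by simp
    qed
    moreover have "card {\<sigma>. \<sigma> permutes Z} = fact (card Z)" using card_permutations finZ[OF Z] by blast
    moreover have "card (fo P (shiftP P) S Z) = psi P (shiftP P) n (card Z)"
      using card_fo[OF finS, of Z] Z cS by simp
    ultimately show ?thesis unfolding G_def by (simp add: card_image card_cartesian_product)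
  qed
  have finG: "finite (G Z)" if "Z \<in> Pow S" for Z
    unfolding G_def using finZ[OF that] finS
    by (intro finite_imageI finite_cartesian_product finite_permutations fo_finite)
  have disj: "G Z \<inter> G Z' = {}" if h3: "Z \<in> Pow S" "Z' \<in> Pow S" "Z \<noteq> Z'" for Z Z'
  proof (rule ccontr)
    assume "G Z \<inter> G Z' \<noteq> {}"
    then obtain f where f: "f \<in> G Z" "f \<in> G Z'" by blast
    obtain \<sigma> p where s: "\<sigma> permutes Z" and p: "p \<in> fo P (shiftP P) S Z" and fe: "f = comb Z \<sigma> p"
      using f(1) unfolding G_def by auto
    obtain \<sigma>' p' where s': "\<sigma>' permutes Z'" and p': "p' \<in> fo P (shiftP P) S Z'" and fe': "f = comb Z' \<sigma>' p'"
      using f(2) unfolding G_def by auto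
    have "cyset n f = Z" using comb_pfun[of Z n \<sigma> p P] h3(1) s p fe by (simp add: S_def)
    moreover have "cyset n f = Z'" using comb_pfun[of Z' n \<sigma>' p' P] h3(2) s' p' fe' by (simp add: S_def)
    ultimately show False using h3(3) by simp
  qed
  have "(\<Sum>f\<in>pfuns P n. h (cyc n f)) = (\<Sum>Z\<in>Pow S. \<Sum>f\<in>G Z. h (cyc n f))"
    unfolding eq by (rule sum.UNION_disjoint) (use finS finG disj in auto)
  also have "\<dots> = (\<Sum>Z\<in>Pow S. fact (card Z) * psi P (shiftP P) n (card Z) * h (card Z))"
  proof (rule sum.cong[OF refl])
    fix Z assume Z: "Z \<in> Pow S"
    have "(\<Sum>f\<in>G Z. h (cyc n f)) = (\<Sum>f\<in>G Z. h (card Z))" using cycG[OF Z] by simp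
    also have "\<dots> = card (G Z) * h (card Z)" by simp
    finally show "(\<Sum>f\<in>G Z. h (cyc n f)) = fact (card Z) * psi P (shiftP P) n (card Z) * h (card Z)"
      using cardG[OF Z] by simp
  qed
  also have "\<dots> = (\<Sum>k\<le>n. (n choose k) * (fact k * psi P (shiftP P) n k * h k))"
    using sum_pow_card[OF finS, of "\<lambda>k. fact k * psi P (shiftP P) n k * h k"] cS by simp
  finally show ?thesis .
qed


lemma fps_mult_trunc:
  fixes A B C :: "'a::comm_ring_1 fps"
  assumes "\<forall>m\<le>n. fps_nth A m = fps_nth B m"
  shows "fps_nth (C * A) n = fps_nth (C * B) n"
  unfolding fps_mult_nth using assms by (intro sum.cong) auto

lemma geom_tele:
  fixes R :: "'a::comm_ring_1"
  shows "(1 - R) * (\<Sum>k\<le>N. R ^ k) = 1 - R ^ Suc N"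
proof (induction N)
  case 0 then show ?case by simp
next
  case (Suc N)
  have "(1 - R) * (\<Sum>k\<le>Suc N. R ^ k) = (1 - R) * (\<Sum>k\<le>N. R ^ k) + (1 - R) * R ^ Suc N"
    by (simp add: algebra_simps)
  also have "\<dots> = 1 - R ^ Suc N + (1 - R) * R ^ Suc N" using Suc by simp
  also have "\<dots> = 1 - R ^ Suc (Suc N)" by (simp add: algebra_simps)
  finally show ?case .
qed

lemma geom2_tele:
  fixes R :: "'a::comm_ring_1"
  shows "(1 - R)^2 * (\<Sum>k\<le>N. of_nat k * R ^ k) = R - of_nat (Suc N) * R ^ Suc N + of_nat N * R ^ Suc (Suc N)"
proof (induction N)
  case 0 then show ?case by (simp add: power2_eq_square algebra_simps)
next
  case (Suc N)
  have e: "(1 - R)^2 * R ^ Suc N = R ^ Suc N - 2 * R ^ Suc (Suc N) + R ^ Suc (Suc (Suc N))"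
    by (simp add: power2_eq_square algebra_simps)
  have "(1 - R)^2 * (\<Sum>k\<le>Suc N. of_nat k * R ^ k) =
        (1 - R)^2 * (\<Sum>k\<le>N. of_nat k * R ^ k) + of_nat (Suc N) * ((1 - R)^2 * R ^ Suc N)"
    by (simp add: algebra_simps)
  also have "\<dots> = R - of_nat (Suc N) * R ^ Suc N + of_nat N * R ^ Suc (Suc N)
      + of_nat (Suc N) * (R ^ Suc N - 2 * R ^ Suc (Suc N) + R ^ Suc (Suc (Suc N)))"
    using Suc e by simp
  also have "\<dots> = R - of_nat (Suc (Suc N)) * R ^ Suc (Suc N) + of_nat (Suc N) * R ^ Suc (Suc (Suc N))"
    by (simp add: algebra_simps)
  finally show ?case .
qed

lemma fps_geom_identity:
  fixes R G X :: "'a::field fps"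
  assumes Rz: "\<And>k n. n < k \<Longrightarrow> fps_nth (R ^ k) n = 0"
    and G: "\<And>n. fps_nth G n = (\<Sum>k\<le>n. fps_nth (R ^ k) n)"
    and X: "\<And>n. fps_nth X n = (\<Sum>k\<le>n. of_nat k * fps_nth (R ^ k) n)"
  shows "X = R * G^2"
proof -
  have GN: "fps_nth G m = fps_nth (\<Sum>k\<le>N. R ^ k) m" if "m \<le> N" for m N
  proof -
    have "fps_nth (\<Sum>k\<le>N. R ^ k) m = (\<Sum>k\<le>N. fps_nth (R ^ k) m)" by (simp add: fps_sum_nth)
    also have "\<dots> = (\<Sum>k\<le>m. fps_nth (R ^ k) m)"
      by (rule sum.mono_neutral_right) (use that Rz in auto)
    finally show ?thesis using G by simp
  qed
  have XN: "fps_nth X m = fps_nth (\<Sum>k\<le>N. of_nat k * R ^ k) m" if "m \<le> N" for m N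
  proof -
    have "fps_nth (\<Sum>k\<le>N. of_nat k * R ^ k) m = (\<Sum>k\<le>N. of_nat k * fps_nth (R ^ k) m)"
      by (simp add: fps_sum_nth fps_of_nat[symmetric])
    also have "\<dots> = (\<Sum>k\<le>m. of_nat k * fps_nth (R ^ k) m)"
      by (rule sum.mono_neutral_right) (use that Rz in auto)
    finally show ?thesis using X by simp
  qed
  have G1: "(1 - R) * G = 1"
  proof (rule fps_ext)
    fix n
    have "fps_nth ((1 - R) * G) n = fps_nth ((1 - R) * (\<Sum>k\<le>n. R ^ k)) n"
      by (rule fps_mult_trunc) (use GN in auto)
    also have "\<dots> = fps_nth (1 - R ^ Suc n) n" by (simp only: geom_tele)
    also have "\<dots> = fps_nth (1 :: 'a fps) n" using Rz[of n "Suc n"] by simp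
    finally show "fps_nth ((1 - R) * G) n = fps_nth (1 :: 'a fps) n" .
  qed
  have X1: "(1 - R)^2 * X = R"
  proof (rule fps_ext)
    fix n
    have "fps_nth ((1 - R)^2 * X) n = fps_nth ((1 - R)^2 * (\<Sum>k\<le>n. of_nat k * R ^ k)) n"
      by (rule fps_mult_trunc) (use XN in auto)
    also have "\<dots> = fps_nth (R - of_nat (Suc n) * R ^ Suc n + of_nat n * R ^ Suc (Suc n)) n"
      by (simp only: geom2_tele)
    also have "\<dots> = fps_nth R n" using Rz[of n "Suc n"] Rz[of n "Suc (Suc n)"] by (simp add: fps_of_nat[symmetric])
    finally show "fps_nth ((1 - R)^2 * X) n = fps_nth R n" .
  qed
  have "X = X * ((1 - R) * G)^2" using G1 by simp
  also have "\<dots> = ((1 - R)^2 * X) * G^2" by (simp only: power_mult_distrib mult_ac)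
  also have "\<dots> = R * G^2" using X1 by simp
  finally show ?thesis .
qed


definition TQ :: "nat set \<Rightarrow> nat set \<Rightarrow> 'a::field_char_0 fps" where
  "TQ P Q = Abs_fps (\<lambda>n. of_nat (n * psi P Q n 1) / fact n)"

lemma TQ_nth: "fps_nth (TQ P Q :: 'a::field_char_0 fps) n = of_nat (n * psi P Q n 1) / fact n"
  by (simp add: TQ_def)

lemma TQ_pow:
  "fps_nth (TQ P Q ^ k :: 'a::field_char_0 fps) n = (if k \<le> n then of_nat (psi P Q n k) / fact (n - k) else 0)"
proof (induction k arbitrary: n)
  case 0
  then show ?case by (simp add: psi_zero)
next
  case (Suc k)
  define t where "t i = (of_nat (i * psi P Q i 1) / fact i :: 'a) *
      (if k \<le> n - i then of_nat (psi P Q (n - i) k) / fact (n - i - k) else 0)" for i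
  have "fps_nth (TQ P Q ^ Suc k :: 'a fps) n = (\<Sum>i=0..n. fps_nth (TQ P Q :: 'a fps) i * fps_nth (TQ P Q ^ k) (n - i))"
    by (simp add: fps_mult_nth)
  also have "\<dots> = (\<Sum>i=0..n. t i)" by (simp add: Suc.IH TQ_nth t_def)
  finally have L: "fps_nth (TQ P Q ^ Suc k :: 'a fps) n = (\<Sum>i=0..n. t i)" .
  have t0: "t 0 = 0" by (simp add: t_def)
  show ?case
  proof (cases "Suc k \<le> n")
    case False
    have "t i = 0" if "i \<in> {0..n}" for i
    proof (cases "i = 0")
      case True then show ?thesis using t0 by simp
    next
      case False
      then have "\<not> k \<le> n - i" using \<open>\<not> Suc k \<le> n\<close> that by auto
      then show ?thesis by (simp add: t_def)
    qed
    then show ?thesis using L False by simp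
  next
    case True
    define m where "m = n - Suc k"
    obtain n' where n': "n = Suc n'" using True by (cases n) auto
    have mn: "m \<le> n'" using n' by (simp add: m_def)
    have "(\<Sum>i=0..n. t i) = t 0 + (\<Sum>j=0..n'. t (Suc j))"
      unfolding n' by (simp only: sum.atLeast0_atMost_Suc_shift comp_def)
    also have "\<dots> = (\<Sum>j=0..m. t (Suc j))"
    proof -
      have "(\<Sum>j=0..n'. t (Suc j)) = (\<Sum>j=0..m. t (Suc j))"
      proof (rule sum.mono_neutral_right)
        show "\<forall>j\<in>{0..n'} - {0..m}. t (Suc j) = 0"
        proof
          fix j assume "j \<in> {0..n'} - {0..m}"
          then have "m < j" "j \<le> n'" by auto
          then have "\<not> k \<le> n - Suc j" using m_def True n' by linarith
          then show "t (Suc j) = 0" by (simp add: t_def)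
        qed
      qed (use mn in auto)
      then show ?thesis using t0 by simp
    qed
    also have "\<dots> = (\<Sum>j=0..m. (of_nat (psi P Q (j + 1) 1) / fact j) * (of_nat (psi P Q (n - j - 1) k) / fact (m - j) :: 'a))"
    proof (rule sum.cong[OF refl])
      fix j assume j: "j \<in> {0..m}"
      then have c1: "k \<le> n - Suc j" and c2: "n - Suc j - k = m - j" using True by (auto simp: m_def)
      have "(of_nat (Suc j * psi P Q (Suc j) 1) / fact (Suc j) :: 'a)
          = (of_nat (Suc j) * of_nat (psi P Q (Suc j) 1)) / (of_nat (Suc j) * fact j)"
        by (simp only: of_nat_mult fact_Suc)
      also have "\<dots> = of_nat (psi P Q (Suc j) 1) / fact j"
        by (rule mult_divide_mult_cancel_left) (simp del: of_nat_Suc)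
      finally have "(of_nat (Suc j * psi P Q (Suc j) 1) / fact (Suc j) :: 'a) = of_nat (psi P Q (Suc j) 1) / fact j" .
      then show "t (Suc j) = (of_nat (psi P Q (j + 1) 1) / fact j) * (of_nat (psi P Q (n - j - 1) k) / fact (m - j) :: 'a)"
        using c1 c2 by (simp add: t_def)
    qed
    also have "\<dots> = of_nat (psi P Q n (Suc k)) / fact m"
    proof -
      have "psi P Q n (Suc k) = (\<Sum>j\<le>m. (m choose j) * (psi P Q (j + 1) 1 * psi P Q (n - j - 1) k))"
        using psi_split[of "Suc k" n P Q] True by (simp add: m_def)
      then have "(of_nat (psi P Q n (Suc k)) :: 'a) / fact m
          = (\<Sum>j\<le>m. of_nat (m choose j) * (of_nat (psi P Q (j + 1) 1) * of_nat (psi P Q (n - j - 1) k))) / fact m"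
        by simp
      also have "\<dots> = (\<Sum>j\<le>m. of_nat (m choose j) * (of_nat (psi P Q (j + 1) 1) * of_nat (psi P Q (n - j - 1) k)) / fact m)"
        by (simp add: sum_divide_distrib)
      also have "\<dots> = (\<Sum>j=0..m. (of_nat (psi P Q (j + 1) 1) / fact j) * (of_nat (psi P Q (n - j - 1) k) / fact (m - j) :: 'a))"
      proof (rule sum.cong)
        show "{..m} = {0..m}" by auto
      next
        fix j assume "j \<in> {0..m}"
        then have "j \<le> m" by simp
        then have "(of_nat (m choose j) :: 'a) = fact m / (fact j * fact (m - j))" by (rule binomial_fact)
        then show "of_nat (m choose j) * (of_nat (psi P Q (j + 1) 1) * of_nat (psi P Q (n - j - 1) k)) / fact m
          = (of_nat (psi P Q (j + 1) 1) / fact j) * (of_nat (psi P Q (n - j - 1) k) / fact (m - j) :: 'a)"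
          by (simp add: field_simps)
      qed
      finally show ?thesis by simp
    qed
    finally show ?thesis using L True by (simp add: m_def)
  qed
qed


lemma div_fact_cancel:
  "(of_nat (Suc j * a) / fact (Suc j) :: 'a::field_char_0) = of_nat a / fact j"
proof -
  have "(of_nat (Suc j * a) / fact (Suc j) :: 'a) = (of_nat (Suc j) * of_nat a) / (of_nat (Suc j) * fact j)"
    by (simp only: of_nat_mult fact_Suc)
  also have "\<dots> = of_nat a / fact j"
    by (rule mult_divide_mult_cancel_left) (simp del: of_nat_Suc)
  finally show ?thesis .
qed

lemma binom_conv:
  assumes "k \<le> n"
  shows "(of_nat ((n choose k) * (fact k * a * h)) / fact n :: 'a::field_char_0) = of_nat h * (of_nat a / fact (n - k))"
proof -
  have "(of_nat (n choose k) :: 'a) = fact n / (fact k * fact (n - k))" by (rule binomial_fact[OF assms])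
  moreover have "(fact n :: 'a) \<noteq> 0" "(fact k :: 'a) \<noteq> 0" "(fact (n - k) :: 'a) \<noteq> 0" by auto
  ultimately show ?thesis by (simp add: field_simps of_nat_mult)
qed

lemma treeGF_TQ: "treeGF P = (TQ P P :: 'a::field_char_0 fps)"
  by (rule fps_ext) (simp add: treeGF_def TQ_def card_ptrees)

lemma R_eq: "(TQ P (shiftP P) :: 'a::field_char_0 fps) = fps_X * (expP (shiftP P) oo TQ P P)"
proof (rule fps_ext)
  fix n
  show "fps_nth (TQ P (shiftP P) :: 'a fps) n = fps_nth (fps_X * (expP (shiftP P) oo TQ P P)) n"
  proof (cases n)
    case 0 then show ?thesis by (simp add: TQ_nth)
  next
    case (Suc m)
    have "fps_nth (TQ P (shiftP P) :: 'a fps) n = of_nat (psi P (shiftP P) (Suc m) 1) / fact m"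
      unfolding Suc TQ_nth by (rule div_fact_cancel)
    also have "\<dots> = of_nat (\<Sum>j\<le>m. (m choose j) * (if j \<in> shiftP P then psi P P m j else 0)) / fact m"
      by (simp only: psi_root)
    also have "\<dots> = (\<Sum>j\<le>m. of_nat ((m choose j) * (fact j * (if j \<in> shiftP P then psi P P m j else 0) * 1)) / fact m * (1 / fact j))"
      by (simp add: sum_divide_distrib of_nat_mult)
    also have "\<dots> = (\<Sum>i=0..m. fps_nth (expP (shiftP P) :: 'a fps) i * fps_nth (TQ P P ^ i) m)"
    proof (rule sum.cong)
      show "{..m} = {0..m}" by auto
    next
      fix i assume "i \<in> {0..m}"
      then have im: "i \<le> m" by simp
      show "of_nat ((m choose i) * (fact i * (if i \<in> shiftP P then psi P P m i else 0) * 1)) / fact m * (1 / fact i)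
          = fps_nth (expP (shiftP P) :: 'a fps) i * fps_nth (TQ P P ^ i) m"
        unfolding binom_conv[OF im]
        by (cases "i \<in> shiftP P") (simp_all add: TQ_pow im expP_def)
    qed
    also have "\<dots> = fps_nth (expP (shiftP P) oo TQ P P) m" by (simp add: fps_compose_nth)
    also have "\<dots> = fps_nth (fps_X * (expP (shiftP P) oo TQ P P)) n" using Suc by simp
    finally show ?thesis .
  qed
qed

lemma funGF_nth: "fps_nth (funGF P :: 'a::field_char_0 fps) n = (\<Sum>k\<le>n. fps_nth (TQ P (shiftP P) ^ k) n)"
proof -
  have "card (pfuns P n) = (\<Sum>f\<in>pfuns P n. (\<lambda>_. 1::nat) (cyc n f))" by simp
  also have "\<dots> = (\<Sum>k\<le>n. (n choose k) * (fact k * psi P (shiftP P) n k * 1))" by (rule sum_pfuns)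
  finally have c: "card (pfuns P n) = (\<Sum>k\<le>n. (n choose k) * (fact k * psi P (shiftP P) n k * 1))" .
  have "fps_nth (funGF P :: 'a fps) n = of_nat (card (pfuns P n)) / fact n" by (simp add: funGF_def)
  also have "\<dots> = of_nat (\<Sum>k\<le>n. (n choose k) * (fact k * psi P (shiftP P) n k * 1)) / fact n"
    by (simp only: c)
  also have "\<dots> = (\<Sum>k\<le>n. of_nat ((n choose k) * (fact k * psi P (shiftP P) n k * 1)) / fact n)"
    by (simp only: of_nat_sum sum_divide_distrib)
  also have "\<dots> = (\<Sum>k\<le>n. fps_nth (TQ P (shiftP P) ^ k :: 'a fps) n)"
  proof (rule sum.cong[OF refl])
    fix k assume "k \<in> {..n}"
    then have kn: "k \<le> n" by simp
    show "of_nat ((n choose k) * (fact k * psi P (shiftP P) n k * 1)) / fact n = fps_nth (TQ P (shiftP P) ^ k :: 'a fps) n"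
      unfolding binom_conv[OF kn] TQ_pow using kn by simp
  qed
  finally show ?thesis .
qed

lemma XiCyc_nth: "fps_nth (XiCyc P :: 'a::field_char_0 fps) n = (\<Sum>k\<le>n. of_nat k * fps_nth (TQ P (shiftP P) ^ k) n)"
proof -
  have pd: "pderiv (\<Sum>f\<in>A. monom (1::'a) (cyc n f)) = (\<Sum>f\<in>A. pderiv (monom 1 (cyc n f)))" for A
    using higher_pderiv_sum[of 1 "\<lambda>f. monom (1::'a) (cyc n f)" A] by simp
  have "fps_nth (XiCyc P :: 'a fps) n = (1 / fact n) * (\<Sum>f\<in>pfuns P n. of_nat (cyc n f))"
    by (simp add: XiCyc_def funCycGF_def pderiv_smult pd pderiv_monom poly_sum poly_monom)
  also have "(\<Sum>f\<in>pfuns P n. (of_nat (cyc n f) :: 'a)) = of_nat (\<Sum>f\<in>pfuns P n. (\<lambda>k. k) (cyc n f))"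
    by simp
  also have "(\<Sum>f\<in>pfuns P n. (\<lambda>k. k) (cyc n f)) = (\<Sum>k\<le>n. (n choose k) * (fact k * psi P (shiftP P) n k * k))"
    by (rule sum_pfuns)
  also have "(1 / fact n) * (of_nat (\<Sum>k\<le>n. (n choose k) * (fact k * psi P (shiftP P) n k * k)) :: 'a)
      = (\<Sum>k\<le>n. of_nat ((n choose k) * (fact k * psi P (shiftP P) n k * k)) / fact n)"
    by (simp only: of_nat_sum sum_divide_distrib mult.commute[of "1 / fact n"] times_divide_eq_right mult_1_right)
  also have "\<dots> = (\<Sum>k\<le>n. of_nat k * fps_nth (TQ P (shiftP P) ^ k :: 'a fps) n)"
  proof (rule sum.cong[OF refl])
    fix k assume "k \<in> {..n}"
    then have kn: "k \<le> n" by simp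
    show "of_nat ((n choose k) * (fact k * psi P (shiftP P) n k * k)) / fact n = of_nat k * fps_nth (TQ P (shiftP P) ^ k :: 'a fps) n"
      unfolding binom_conv[OF kn] TQ_pow using kn by simp
  qed
  finally show ?thesis .
qed

theorem theorem5p10:
  fixes P :: "nat set"
  shows "(XiCyc P :: 'a::field_char_0 fps)
         = fps_X * (expP (shiftP P) oo treeGF P) * (funGF P)^2"
proof -
  have "(XiCyc P :: 'a fps) = TQ P (shiftP P) * (funGF P)^2"
  proof (rule fps_geom_identity)
    fix k n :: nat assume "n < k"
    then show "fps_nth (TQ P (shiftP P) ^ k :: 'a fps) n = 0" by (simp add: TQ_pow)
  next
    fix n show "fps_nth (funGF P :: 'a fps) n = (\<Sum>k\<le>n. fps_nth (TQ P (shiftP P) ^ k) n)" by (rule funGF_nth)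
  next
    fix n show "fps_nth (XiCyc P :: 'a fps) n = (\<Sum>k\<le>n. of_nat k * fps_nth (TQ P (shiftP P) ^ k) n)" by (rule XiCyc_nth)
  qed
  then show ?thesis by (simp add: R_eq treeGF_TQ)
qed

end
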